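(* Fix $\mu\in(-1,1)$, let $m>0$ and $\kappa>0$ small, let $\xi\in\mathcal A_{\rho_\varepsilon}$ (i.e. $u^\xi\in\mathcal M_\mu$), and let $v$ (sufficiently regular) satisfy $\langle v,u^\xi_i\rangle=0$ for $i=1,\dots,N$, $\|v\|<\varepsilon^{3/2+m}$ and $\|v\|_{L^4}<\varepsilon^{3/4+m/2-\kappa}$. Then for each $i=1,\dots,N$, $$\langle u^\xi_i,\mathcal L(u^\xi+v)\rangle\le C\varepsilon^{2+2m-2\kappa},$$ with $C$ independent of $\varepsilon,\xi,v$.
   Context: $0<\varepsilon\ll1$; $f(u)=u^3-u$; $\langle\cdot,\cdot\rangle$, $\|\cdot\|$ inner product and norm of $L^2(0,1)$. $U(x)=\tanh(x/\sqrt2)$; $U(x;\xi,\pm1)=\pm U((x-\xi)/\varepsilon)$. Fix an integer $N\ge1$, small $\kappa_0>0$, $\rho_\varepsilon=\varepsilon^{\kappa_0}$. $\Omega_{\rho_\varepsilon}=\{h\in\mathbb R^{N+1}:0<h_1<\dots<h_{N+1}<1,\ \min_{j=0,\dots,N+1}|h_{j+1}-h_j|>\varepsilon/\rho_\varepsilon\}$ with $h_0=-h_1$, $h_{N+2}=2-h_{N+1}$. For $h\in\Omega_{\rho_\varepsilon}$, $u^h=\sum_{j=1}^{N+1}U(\cdot;h_j,(-1)^{j+1})+\beta_N$, where $\beta_N=\frac{(-1)^N-1}{2}+\mathcal O(\exp)$ (also for derivatives; exponentially small in $\varepsilon$) makes $u^h(0)=-1$ and $u^h$ satisfy Neumann boundary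 conditions. $\mathcal M=\{u^h:h\in\Omega_{\rho_\varepsilon}\}$, $\mathcal M_\mu=\{u^h\in\mathcal M:\int_0^1u^h=\mu\}$. There is a smooth map $h_{N+1}:[0,1]^N\to\mathbb R$ such that $u^h\in\mathcal M_\mu$ iff $h=(\xi,h_{N+1}(\xi))\in\Omega_{\rho_\varepsilon}$, $\xi=(h_1,\dots,h_N)$; $\mathcal A_{\rho_\varepsilon}=\{(\xi,h_{N+1}(\xi))\in\Omega_{\rho_\varepsilon}:\xi\in[0,1]^N\}$, and for such $\xi$, $u^\xi=u^{(\xi,h_{N+1}(\xi))}$, $u^\xi_i=\partial_{\xi_i}u^\xi$. $\mathcal L(\psi)=\varepsilon^2\psi_{xx}-f(\psi)$. *)

theory Defs
  imports "HOL-Analysis.Analysis"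
begin

definition fAC :: "real \<Rightarrow> real" where
  "fAC u = u ^ 3 - u"

definition Uw :: "real \<Rightarrow> real" where
  "Uw x = tanh (x / sqrt 2)"

text \<open>Sum of the N+1 alternating layers sum_{j=1}^{N+1} U(x; h_j, (-1)^(j+1)).
  Layer positions h are indexed by 1..N+1 (other values of h are irrelevant).\<close>
definition layers :: "real \<Rightarrow> nat \<Rightarrow> (nat \<Rightarrow> real) \<Rightarrow> real \<Rightarrow> real" where
  "layers \<epsilon> N h x = (\<Sum>j=1..N+1. (-1) ^ (j+1) * Uw ((x - h j) / \<epsilon>))"

text \<open>Correction beta_N (a function of x, exponentially small up to the constant
  ((-1)^N - 1)/2, also in derivatives), chosen so that u^h(0) = -1 and
  u^h satisfies homogeneous Neumann boundary conditions at 0 and 1.\<close>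
definition betaN :: "real \<Rightarrow> nat \<Rightarrow> (nat \<Rightarrow> real) \<Rightarrow> real \<Rightarrow> real" where
  "betaN \<epsilon> N h x =
     (let a = deriv (layers \<epsilon> N h) 0; b = deriv (layers \<epsilon> N h) 1
      in - 1 - layers \<epsilon> N h 0 - a * x + (a - b) * x ^ 2 / 2)"

definition uh :: "real \<Rightarrow> nat \<Rightarrow> (nat \<Rightarrow> real) \<Rightarrow> real \<Rightarrow> real" where
  "uh \<epsilon> N h x = layers \<epsilon> N h x + betaN \<epsilon> N h x"

definition hext :: "nat \<Rightarrow> (nat \<Rightarrow> real) \<Rightarrow> nat \<Rightarrow> real" where
  "hext N h j = (if j = 0 then - h 1 else if j = N + 2 then 2 - h (N+1) else h j)"

definition Omega :: "real \<Rightarrow> real \<Rightarrow> nat \<Rightarrow> (nat \<Rightarrow> real) set" where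
  "Omega \<epsilon> \<rho> N = {h. 0 < h 1 \<and> (\<forall>j\<in>{1..N}. h j < h (j+1)) \<and> h (N+1) < 1 \<and>
       (\<forall>j\<in>{0..N+1}. \<bar>hext N h (j+1) - hext N h j\<bar> > \<epsilon> / \<rho>)}"

definition hcomb :: "nat \<Rightarrow> (nat \<Rightarrow> real) \<Rightarrow> real \<Rightarrow> nat \<Rightarrow> real" where
  "hcomb N \<xi> t = \<xi>(N+1 := t)"

definition mass :: "real \<Rightarrow> nat \<Rightarrow> (nat \<Rightarrow> real) \<Rightarrow> real" where
  "mass \<epsilon> N h = integral {0..1} (uh \<epsilon> N h)"

text \<open>u^xi = u^{(xi, H xi)} where H plays the role of the map h_{N+1}.\<close>
definition uxi :: "real \<Rightarrow> nat \<Rightarrow> ((nat \<Rightarrow> real) \<Rightarrow> real) \<Rightarrow> (nat \<Rightarrow> real) \<Rightarrow> real \<Rightarrow> real" where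
  "uxi \<epsilon> N H \<xi> = uh \<epsilon> N (hcomb N \<xi> (H \<xi>))"

definition uxi_i :: "real \<Rightarrow> nat \<Rightarrow> ((nat \<Rightarrow> real) \<Rightarrow> real) \<Rightarrow> (nat \<Rightarrow> real) \<Rightarrow> nat \<Rightarrow> real \<Rightarrow> real" where
  "uxi_i \<epsilon> N H \<xi> i x = deriv (\<lambda>s. uxi \<epsilon> N H (\<xi>(i := \<xi> i + s)) x) 0"

text \<open>H is (locally along each coordinate direction at xi) the map h_{N+1}:
  it is differentiable and keeps the mass equal to mu.\<close>
definition mass_map_at :: "real \<Rightarrow> nat \<Rightarrow> real \<Rightarrow> ((nat \<Rightarrow> real) \<Rightarrow> real) \<Rightarrow> (nat \<Rightarrow> real) \<Rightarrow> bool" where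
  "mass_map_at \<epsilon> N \<mu> H \<xi> \<longleftrightarrow>
     (\<forall>i\<in>{1..N}. (\<lambda>s. H (\<xi>(i := \<xi> i + s))) differentiable (at 0) \<and>
        (\<forall>\<^sub>F s in nhds 0. mass \<epsilon> N (hcomb N (\<xi>(i := \<xi> i + s)) (H (\<xi>(i := \<xi> i + s)))) = \<mu>))"

definition ip :: "(real \<Rightarrow> real) \<Rightarrow> (real \<Rightarrow> real) \<Rightarrow> real" where
  "ip f g = integral {0..1} (\<lambda>x. f x * g x)"

definition L2norm :: "(real \<Rightarrow> real) \<Rightarrow> real" where
  "L2norm f = sqrt (integral {0..1} (\<lambda>x. (f x) ^ 2))"

definition L4norm :: "(real \<Rightarrow> real) \<Rightarrow> real" where
  "L4norm f = (integral {0..1} (\<lambda>x. (f x) ^ 4)) powr (1/4)"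

definition Lop :: "real \<Rightarrow> (real \<Rightarrow> real) \<Rightarrow> real \<Rightarrow> real" where
  "Lop \<epsilon> \<psi> x = \<epsilon>\<^sup>2 * deriv (deriv \<psi>) x - fAC (\<psi> x)"

definition regular_neumann :: "(real \<Rightarrow> real) \<Rightarrow> bool" where
  "regular_neumann v \<longleftrightarrow>
     (\<forall>x\<in>{0..1}. v differentiable (at x) \<and> deriv v differentiable (at x)) \<and>
     continuous_on {0..1} (deriv (deriv v)) \<and> deriv v 0 = 0 \<and> deriv v 1 = 0"

end

theory Submission
  imports Defs
begin

definition T1 :: "real \<Rightarrow> real" where "T1 y = (1 - (Uw y)^2) / sqrt 2"
definition T2 :: "real \<Rightarrow> real" where "T2 y = Uw y ^ 3 - Uw y"
definition T3 :: "real \<Rightarrow> real" where "T3 y = (3 * Uw y ^ 2 - 1) * T1 y"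
definition EE :: "real \<Rightarrow> real" where "EE y = 1 - Uw y ^ 2"

lemma Uw_deriv: "(Uw has_real_derivative T1 y) (at y)"
proof -
  have "((\<lambda>y. tanh (y / sqrt 2)) has_real_derivative (1 - tanh (y/sqrt 2)^2) * (1 / sqrt 2)) (at y)"
    using has_field_derivative_tanh[OF cosh_real_nonzero DERIV_cdivide[OF DERIV_ident]] by simp
  moreover have "(1 - tanh (y/sqrt 2)^2) * (1 / sqrt 2) = T1 y" by (simp add: T1_def Uw_def)
  ultimately show ?thesis unfolding Uw_def[abs_def] by simp
qed

lemma T1_deriv: "(T1 has_real_derivative T2 y) (at y)"
proof -
  have "((\<lambda>y. 1 - (Uw y)^2) has_real_derivative - (2 * Uw y * T1 y)) (at y)"
    by (auto intro!: derivative_eq_intros Uw_deriv)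
  then have "((\<lambda>y. (1 - (Uw y)^2) / sqrt 2) has_real_derivative (- (2 * Uw y * T1 y)) / sqrt 2) (at y)"
    by (rule DERIV_cdivide)
  moreover have "(- (2 * Uw y * T1 y)) / sqrt 2 = T2 y"
  proof -
    have s: "sqrt 2 * sqrt 2 = (2::real)" by simp
    have "(- (2 * Uw y * T1 y)) / sqrt 2 = - Uw y * (1 - (Uw y)^2) * (2 / (sqrt 2 * sqrt 2))"
      unfolding T1_def by (simp add: field_simps)
    also have "\<dots> = T2 y" unfolding s T2_def by (simp add: algebra_simps power3_eq_cube power2_eq_square)
    finally show ?thesis .
  qed
  ultimately show ?thesis unfolding T1_def[abs_def] by simp
qed

lemma T2_deriv: "(T2 has_real_derivative T3 y) (at y)"
proof -
  have "((\<lambda>y. Uw y ^ 3 - Uw y) has_real_derivative (3 * Uw y ^ 2 * T1 y - T1 y)) (at y)"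
    by (auto intro!: derivative_eq_intros Uw_deriv)
  then show ?thesis unfolding T2_def[abs_def] T3_def by (simp add: algebra_simps)
qed

lemma Uw_abs: "\<bar>Uw y\<bar> < 1"
  unfolding Uw_def using tanh_real_bounds[of "y / sqrt 2"] by auto

lemma EE_pos: "0 < EE y" and EE_le1: "EE y \<le> 1"
proof -
  have "\<bar>Uw y\<bar> < 1" by (rule Uw_abs)
  then have "Uw y ^ 2 < 1" by (simp add: abs_square_less_1)
  then show "0 < EE y" unfolding EE_def by simp
  show "EE y \<le> 1" unfolding EE_def by simp
qed

lemma T1_bound: "\<bar>T1 y\<bar> \<le> EE y"
proof -
  have "0 < EE y" by (rule EE_pos)
  then show ?thesis unfolding T1_def EE_def
    by (simp add: abs_div divide_le_eq)
qed

lemma T2_bound: "\<bar>T2 y\<bar> \<le> EE y"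
proof -
  have a: "\<bar>Uw y\<bar> \<le> 1" using Uw_abs[of y] by simp
  have "T2 y = - Uw y * EE y" unfolding T2_def EE_def by (simp add: algebra_simps power3_eq_cube power2_eq_square)
  then have "\<bar>T2 y\<bar> = \<bar>Uw y\<bar> * EE y" using EE_pos[of y] by (simp add: abs_mult)
  also have "\<dots> \<le> EE y" using a EE_pos[of y] by (simp add: mult_le_cancel_right1)
  finally show ?thesis .
qed

lemma T3_bound: "\<bar>T3 y\<bar> \<le> 2 * EE y"
proof -
  have a: "Uw y ^ 2 \<le> 1" using Uw_abs[of y] by (simp add: abs_square_le_1 less_imp_le)
  have b: "\<bar>3 * Uw y ^ 2 - 1\<bar> \<le> 2" unfolding abs_le_iff using a zero_le_power2[of "Uw y"] by linarith
  have "\<bar>T3 y\<bar> = \<bar>3 * Uw y ^ 2 - 1\<bar> * \<bar>T1 y\<bar>" unfolding T3_def by (simp add: abs_mult)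
  also have "\<dots> \<le> 2 * EE y" using b T1_bound[of y] by (intro mult_mono) auto
  finally show ?thesis .
qed

lemma Uw_sgn: "y \<noteq> 0 \<Longrightarrow> \<bar>Uw y - sgn y\<bar> \<le> EE y"
proof -
  assume "y \<noteq> 0"
  have a: "\<bar>Uw y\<bar> < 1" by (rule Uw_abs)
  show ?thesis
  proof (cases "y > 0")
    case True
    then have "Uw y > 0" unfolding Uw_def by simp
    then show ?thesis using True a unfolding EE_def
      by (simp add: power2_eq_square)
  next
    case False
    then have "y < 0" using \<open>y \<noteq> 0\<close> by simp
    then have "y / sqrt 2 < 0" by (simp add: divide_neg_pos)
    then have "Uw y < 0" unfolding Uw_def by simp
    moreover have "(1 + Uw y) * 1 \<le> (1 + Uw y) * (1 - Uw y)"
        using a \<open>Uw y < 0\<close> by (intro mult_left_mono) auto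
    ultimately show ?thesis using \<open>y < 0\<close> a by (simp add: EE_def power2_eq_square algebra_simps)
  qed
qed

lemma EE_exp: "EE y \<le> 4 * exp (- \<bar>y\<bar>)"
proof -
  define z where "z = y / sqrt 2"
  have c: "cosh z \<ge> exp \<bar>z\<bar> / 2"
    unfolding cosh_def by (cases "z \<ge> 0") auto
  have "0 < 1 + (sinh z)^2" by (metis add_pos_nonneg zero_le_power2 zero_less_one)
  have e1: "EE y = 1 / (cosh z)^2"
    unfolding EE_def Uw_def z_def[symmetric] tanh_def
    using cosh_square_eq[of z] by (simp add: field_simps power_divide)
      (use \<open>0 < 1 + (sinh z)^2\<close> in \<open>simp add: divide_simps\<close>)
  have c2: "exp \<bar>z\<bar> ^ 2 / 4 \<le> (cosh z) ^ 2"
  proof -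
    have "(exp \<bar>z\<bar> / 2) ^ 2 \<le> (cosh z) ^ 2" using c by (intro power_mono) auto
    then show ?thesis by (simp add: power_divide)
  qed
  have ez: "exp \<bar>z\<bar> ^ 2 = exp (2 * \<bar>z\<bar>)" by (simp add: power2_eq_square exp_add[symmetric])
  have "EE y \<le> 1 / (exp \<bar>z\<bar> ^ 2 / 4)" unfolding e1
    using c2 by (intro divide_left_mono) auto
  also have "\<dots> = 4 * exp (- (2 * \<bar>z\<bar>))" unfolding ez exp_minus by (simp add: divide_simps)
  also have "\<dots> \<le> 4 * exp (- \<bar>y\<bar>)"
  proof -
    have "\<bar>y\<bar> \<le> 2 * \<bar>z\<bar>"
    proof -
      have "2 * \<bar>z\<bar> = \<bar>y\<bar> * (2 / sqrt 2)" unfolding z_def by (simp add: abs_div)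
      also have "2 / sqrt 2 = sqrt 2" by (metis real_div_sqrt zero_le_numeral)
      finally have "2 * \<bar>z\<bar> = \<bar>y\<bar> * sqrt 2" .
      moreover have "\<bar>y\<bar> \<le> \<bar>y\<bar> * sqrt 2" by (rule mult_le_cancel_left1[THEN iffD2]) auto
      ultimately show ?thesis by simp
    qed
    then show ?thesis by simp
  qed
  finally show ?thesis .
qed

definition Lc :: "real \<Rightarrow> real" where "Lc z = ln (cosh (z / sqrt 2)) * sqrt 2"

lemma Lc_deriv: "(Lc has_real_derivative Uw z) (at z)"
proof -
  have a: "((\<lambda>z. cosh (z/sqrt 2)) has_real_derivative sinh (z/sqrt 2) * (1/sqrt 2)) (at z)"
    using has_field_derivative_cosh[OF DERIV_cdivide[OF DERIV_ident]] by simp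
  have b: "((\<lambda>z. ln (cosh (z / sqrt 2))) has_real_derivative 1 / cosh (z / sqrt 2) * (sinh (z/sqrt 2) * (1/sqrt 2))) (at z)"
    using DERIV_chain2[OF DERIV_ln_divide a] by simp
  have "((\<lambda>z. ln (cosh (z / sqrt 2)) * sqrt 2) has_real_derivative
     (1 / cosh (z / sqrt 2) * (sinh (z/sqrt 2) * (1/sqrt 2))) * sqrt 2) (at z)"
    by (rule DERIV_cmult_right[OF b])
  moreover have "(1 / cosh (z / sqrt 2) * (sinh (z/sqrt 2) * (1/sqrt 2))) * sqrt 2 = Uw z"
    unfolding Uw_def tanh_def by simp
  ultimately show ?thesis unfolding Lc_def[abs_def] by simp
qed

lemma Uw_chain [derivative_intros]:
  "(f has_real_derivative D) (at x within S) \<Longrightarrow> ((\<lambda>x. Uw (f x)) has_real_derivative T1 (f x) * D) (at x within S)"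
  using DERIV_chain2[OF Uw_deriv] by blast
lemma T1_chain [derivative_intros]:
  "(f has_real_derivative D) (at x within S) \<Longrightarrow> ((\<lambda>x. T1 (f x)) has_real_derivative T2 (f x) * D) (at x within S)"
  using DERIV_chain2[OF T1_deriv] by blast
lemma T2_chain [derivative_intros]:
  "(f has_real_derivative D) (at x within S) \<Longrightarrow> ((\<lambda>x. T2 (f x)) has_real_derivative T3 (f x) * D) (at x within S)"
  using DERIV_chain2[OF T2_deriv] by blast
lemma Lc_chain [derivative_intros]:
  "(f has_real_derivative D) (at x within S) \<Longrightarrow> ((\<lambda>x. Lc (f x)) has_real_derivative Uw (f x) * D) (at x within S)"
  using DERIV_chain2[OF Lc_deriv] by blast

definition sg :: "nat \<Rightarrow> real" where "sg j = (-1) ^ (j+1)"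

definition phi :: "real \<Rightarrow> real \<Rightarrow> real \<Rightarrow> real" where
  "phi e t x = Uw ((x-t)/e) - Uw (-t/e) - x * T1 (-t/e) / e + x^2/2 * (T1 (-t/e) - T1 ((1-t)/e)) / e"
definition phix :: "real \<Rightarrow> real \<Rightarrow> real \<Rightarrow> real" where
  "phix e t x = T1 ((x-t)/e) / e - T1 (-t/e) / e + x * (T1 (-t/e) - T1 ((1-t)/e)) / e"
definition phixx :: "real \<Rightarrow> real \<Rightarrow> real \<Rightarrow> real" where
  "phixx e t x = T2 ((x-t)/e) / e^2 + (T1 (-t/e) - T1 ((1-t)/e)) / e"
definition phit :: "real \<Rightarrow> real \<Rightarrow> real \<Rightarrow> real" where
  "phit e t x = - T1 ((x-t)/e) / e + T1 (-t/e) / e + x * T2 (-t/e) / e^2 - x^2/2 * (T2 (-t/e) - T2 ((1-t)/e)) / e^2"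
definition phitx :: "real \<Rightarrow> real \<Rightarrow> real \<Rightarrow> real" where
  "phitx e t x = - T2 ((x-t)/e) / e^2 + T2 (-t/e) / e^2 - x * (T2 (-t/e) - T2 ((1-t)/e)) / e^2"
definition phitxx :: "real \<Rightarrow> real \<Rightarrow> real \<Rightarrow> real" where
  "phitxx e t x = - T3 ((x-t)/e) / e^3 - (T2 (-t/e) - T2 ((1-t)/e)) / e^2"
definition Phi :: "real \<Rightarrow> real \<Rightarrow> real" where
  "Phi e t = e * Lc ((1-t)/e) - e * Lc (-t/e) - Uw (-t/e) - T1 (-t/e) / (2*e) + (T1 (-t/e) - T1 ((1-t)/e)) / (6*e)"
definition Phid :: "real \<Rightarrow> real \<Rightarrow> real" where
  "Phid e t = - Uw ((1-t)/e) + Uw (-t/e) + T1 (-t/e) / e + T2 (-t/e) / (2*e^2) - (T2 (-t/e) - T2 ((1-t)/e)) / (6*e^2)"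

lemma phi_dx: "e \<noteq> 0 \<Longrightarrow> (phi e t has_real_derivative phix e t x) (at x)"
  unfolding phi_def[abs_def] phix_def
  by (auto intro!: derivative_eq_intros simp: field_simps power2_eq_square)

lemma phix_dx: "e \<noteq> 0 \<Longrightarrow> (phix e t has_real_derivative phixx e t x) (at x)"
  unfolding phix_def[abs_def] phixx_def
  by (auto intro!: derivative_eq_intros simp: field_simps power2_eq_square)

lemma phi_dt: "e \<noteq> 0 \<Longrightarrow> ((\<lambda>t. phi e t x) has_real_derivative phit e t x) (at t)"
  unfolding phi_def phit_def
  by (auto intro!: derivative_eq_intros simp: field_simps power2_eq_square)

lemma phit_dx: "e \<noteq> 0 \<Longrightarrow> (phit e t has_real_derivative phitx e t x) (at x)"
  unfolding phit_def[abs_def] phitx_def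
  by (auto intro!: derivative_eq_intros simp: field_simps power2_eq_square)

lemma phitx_dx: "e \<noteq> 0 \<Longrightarrow> (phitx e t has_real_derivative phitxx e t x) (at x)"
  unfolding phitx_def[abs_def] phitxx_def
  by (auto intro!: derivative_eq_intros simp: field_simps power2_eq_square power3_eq_cube)

lemma Phi_dt: "e \<noteq> 0 \<Longrightarrow> (Phi e has_real_derivative Phid e t) (at t)"
  unfolding Phi_def[abs_def] Phid_def
  by (auto intro!: derivative_eq_intros simp: field_simps power2_eq_square)

lemma phi_integral: "e \<noteq> 0 \<Longrightarrow> (phi e t has_integral Phi e t) {0..1}"
proof -
  assume e: "e \<noteq> 0"
  define A where "A x = e * Lc ((x-t)/e) - x * Uw (-t/e) - x^2/2 * T1 (-t/e) / e + x^3/6 * (T1 (-t/e) - T1 ((1-t)/e)) / e" for x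
  have d: "(A has_real_derivative phi e t x) (at x)" for x
    unfolding A_def[abs_def] phi_def using e
    by (auto intro!: derivative_eq_intros simp: field_simps power2_eq_square power3_eq_cube)
  have "(phi e t has_integral (A 1 - A 0)) {0..1}"
    by (rule fundamental_theorem_of_calculus) (auto intro: has_real_derivative_iff_has_vector_derivative[THEN iffD1, OF DERIV_subset[OF d]])
  moreover have "A 1 - A 0 = Phi e t" unfolding A_def Phi_def by (simp add: field_simps)
  ultimately show ?thesis by simp
qed

lemma layers_deriv: "e \<noteq> 0 \<Longrightarrow>
  (layers e N h has_real_derivative (\<Sum>j=1..N+1. sg j * (T1 ((y - h j)/e) / e))) (at y)"
  unfolding layers_def[abs_def] sg_def
  by (rule DERIV_sum) (auto intro!: derivative_eq_intros)

lemma uh_eq: assumes "e \<noteq> 0"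
  shows "uh e N h x = -1 + (\<Sum>j=1..N+1. sg j * phi e (h j) x)"
proof -
  have d0: "deriv (layers e N h) 0 = (\<Sum>j=1..N+1. sg j * (T1 ((0 - h j)/e) / e))"
    using DERIV_imp_deriv[OF layers_deriv[OF assms]] by blast
  have d1: "deriv (layers e N h) 1 = (\<Sum>j=1..N+1. sg j * (T1 ((1 - h j)/e) / e))"
    using DERIV_imp_deriv[OF layers_deriv[OF assms]] by blast
  have l: "layers e N h z = (\<Sum>j=1..N+1. sg j * Uw ((z - h j)/e))" for z
    unfolding layers_def sg_def by simp
  have gen: "finite A \<Longrightarrow> (\<Sum>j\<in>A. sg j * Uw ((x - h j) / e)) + (- 1 - (\<Sum>j\<in>A. sg j * Uw ((0 - h j) / e)) -
     (\<Sum>j\<in>A. sg j * (T1 ((0 - h j) / e) / e)) * x +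
     ((\<Sum>j\<in>A. sg j * (T1 ((0 - h j) / e) / e)) - (\<Sum>j\<in>A. sg j * (T1 ((1 - h j) / e) / e))) * x\<^sup>2 / 2) =
    -1 + (\<Sum>j\<in>A. sg j * (Uw ((x-h j)/e) - Uw (-h j/e) - x * T1 (-h j/e) / e + x^2/2 * (T1 (-h j/e) - T1 ((1-h j)/e)) / e))" for A
    by (induction A rule: finite_induct) (auto simp: algebra_simps add_divide_distrib diff_divide_distrib)
  show ?thesis
    unfolding uh_def betaN_def Let_def d0 d1 l phi_def
    by (rule gen) simp
qed

definition hsv :: "nat \<Rightarrow> ((nat \<Rightarrow> real) \<Rightarrow> real) \<Rightarrow> (nat \<Rightarrow> real) \<Rightarrow> nat \<Rightarrow> real \<Rightarrow> nat \<Rightarrow> real" where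
  "hsv N H \<xi> i s = hcomb N (\<xi>(i := \<xi> i + s)) (H (\<xi>(i := \<xi> i + s)))"

lemma sum_deriv_hs:
  fixes g g' :: "real \<Rightarrow> real"
  assumes g: "\<And>t. (g has_real_derivative g' t) (at t)"
    and i: "1 \<le> i" "i \<le> N"
    and Hd: "((\<lambda>s. H (\<xi>(i := \<xi> i + s))) has_real_derivative Hd) (at 0)"
  shows "((\<lambda>s. \<Sum>j=1..N+1. sg j * g (hsv N H \<xi> i s j)) has_real_derivative
           sg i * g' (\<xi> i) + sg (N+1) * g' (H \<xi>) * Hd) (at 0)"
proof -
  define dj where "dj j = (if j = i then 1 else 0) + (if j = N+1 then Hd else 0)" for j
  have h0: "hsv N H \<xi> i 0 j = (if j = N+1 then H \<xi> else \<xi> j)" for j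
    unfolding hsv_def hcomb_def by simp
  have each: "((\<lambda>s. sg j * g (hsv N H \<xi> i s j)) has_real_derivative
           sg j * (g' (hsv N H \<xi> i 0 j) * dj j)) (at 0)" if "j \<in> {1..N+1}" for j
  proof (cases "j = N+1")
    case True
    have "((\<lambda>s. g (H (\<xi>(i := \<xi> i + s)))) has_real_derivative g' (H (\<xi>(i := \<xi> i + 0))) * Hd) (at 0)"
      by (rule DERIV_chain2[OF g Hd])
    then show ?thesis using True i unfolding hsv_def hcomb_def dj_def
      by (auto intro!: DERIV_cmult)
  next
    case False
    show ?thesis
    proof (cases "j = i")
      case True
      have "((\<lambda>s. g (\<xi> i + s)) has_real_derivative g' (\<xi> i + 0) * 1) (at 0)"
        by (rule DERIV_chain2[OF g]) (auto intro!: derivative_eq_intros)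
      then show ?thesis using True False i unfolding hsv_def hcomb_def dj_def
        by (auto intro!: DERIV_cmult)
    next
      case False2: False
      then show ?thesis using False i unfolding hsv_def hcomb_def dj_def by simp
    qed
  qed
  have "((\<lambda>s. \<Sum>j=1..N+1. sg j * g (hsv N H \<xi> i s j)) has_real_derivative
           (\<Sum>j=1..N+1. sg j * (g' (hsv N H \<xi> i 0 j) * dj j))) (at 0)"
    by (rule DERIV_sum) (use each in auto)
  moreover have "(\<Sum>j=1..N+1. sg j * (g' (hsv N H \<xi> i 0 j) * dj j)) = sg i * g' (\<xi> i) + sg (N+1) * g' (H \<xi>) * Hd"
  proof -
    have "(\<Sum>j=1..N+1. sg j * (g' (hsv N H \<xi> i 0 j) * dj j)) =
      (\<Sum>j=1..N+1. (if j = i then sg j * g' (hsv N H \<xi> i 0 j) else 0)) +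
      (\<Sum>j=1..N+1. (if j = N+1 then sg j * g' (hsv N H \<xi> i 0 j) * Hd else 0))"
      unfolding sum.distrib[symmetric] by (rule sum.cong) (auto simp: dj_def algebra_simps)
    also have "\<dots> = sg i * g' (hsv N H \<xi> i 0 i) + sg (N+1) * g' (hsv N H \<xi> i 0 (N+1)) * Hd"
      unfolding sum.delta[OF finite_atLeastAtMost] using i by simp
    also have "\<dots> = sg i * g' (\<xi> i) + sg (N+1) * g' (H \<xi>) * Hd"
      using i by (simp add: h0)
    finally show ?thesis .
  qed
  ultimately show ?thesis by simp
qed

lemma uxi_s_eq: "e \<noteq> 0 \<Longrightarrow> uxi e N H (\<xi>(i := \<xi> i + s)) x = -1 + (\<Sum>j=1..N+1. sg j * phi e (hsv N H \<xi> i s j) x)"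
  unfolding uxi_def hsv_def by (rule uh_eq)

lemma uxi_i_eq:
  assumes e: "e \<noteq> 0" and i: "1 \<le> i" "i \<le> N"
    and Hd: "((\<lambda>s. H (\<xi>(i := \<xi> i + s))) has_real_derivative Hd) (at 0)"
  shows "uxi_i e N H \<xi> i x = sg i * phit e (\<xi> i) x + sg (N+1) * phit e (H \<xi>) x * Hd"
proof -
  have "((\<lambda>s. \<Sum>j=1..N+1. sg j * phi e (hsv N H \<xi> i s j) x) has_real_derivative
           sg i * phit e (\<xi> i) x + sg (N+1) * phit e (H \<xi>) x * Hd) (at 0)"
    by (rule sum_deriv_hs[where g="\<lambda>t. phi e t x" and g'="\<lambda>t. phit e t x", OF phi_dt[OF e] i Hd])
  then have "((\<lambda>s. -1 + (\<Sum>j=1..N+1. sg j * phi e (hsv N H \<xi> i s j) x)) has_real_derivative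
           0 + (sg i * phit e (\<xi> i) x + sg (N+1) * phit e (H \<xi>) x * Hd)) (at 0)"
    by (rule DERIV_add[OF DERIV_const])
  then have "((\<lambda>s. uxi e N H (\<xi>(i := \<xi> i + s)) x) has_real_derivative
           sg i * phit e (\<xi> i) x + sg (N+1) * phit e (H \<xi>) x * Hd) (at 0)"
    unfolding uxi_s_eq[OF e] by (simp only: add_0_left)
  then show ?thesis unfolding uxi_i_def by (rule DERIV_imp_deriv)
qed

lemma mass_eq: assumes e: "e \<noteq> 0" shows "mass e N h = -1 + (\<Sum>j=1..N+1. sg j * Phi e (h j))"
proof -
  have "((\<lambda>x. -1 + (\<Sum>j=1..N+1. sg j * phi e (h j) x)) has_integral (-1 + (\<Sum>j=1..N+1. sg j * Phi e (h j)))) {0..1}"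
  proof (rule has_integral_add)
    show "((\<lambda>x. -1::real) has_integral -1) {0..1::real}"
      using has_integral_const_real[of "-1::real" 0 1] by simp
    show "((\<lambda>x. \<Sum>j=1..N+1. sg j * phi e (h j) x) has_integral (\<Sum>j=1..N+1. sg j * Phi e (h j))) {0..1}"
      by (rule has_integral_sum) (auto intro!: has_integral_mult_right phi_integral e)
  qed
  then show ?thesis unfolding mass_def uh_eq[OF e, abs_def] by (rule integral_unique)
qed

lemma Hd_relation:
  assumes e: "e \<noteq> 0" and i: "1 \<le> i" "i \<le> N"
    and Hd: "((\<lambda>s. H (\<xi>(i := \<xi> i + s))) has_real_derivative Hd) (at 0)"
    and ev: "\<forall>\<^sub>F s in nhds 0. mass e N (hcomb N (\<xi>(i := \<xi> i + s)) (H (\<xi>(i := \<xi> i + s)))) = \<mu>"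
  shows "sg i * Phid e (\<xi> i) + sg (N+1) * Phid e (H \<xi>) * Hd = 0"
proof -
  have d: "((\<lambda>s. \<Sum>j=1..N+1. sg j * Phi e (hsv N H \<xi> i s j)) has_real_derivative
           sg i * Phid e (\<xi> i) + sg (N+1) * Phid e (H \<xi>) * Hd) (at 0)"
    by (rule sum_deriv_hs[OF Phi_dt[OF e] i Hd])
  have m: "mass e N (hsv N H \<xi> i s) = -1 + (\<Sum>j=1..N+1. sg j * Phi e (hsv N H \<xi> i s j))" for s
    by (rule mass_eq[OF e])
  have "((\<lambda>s. -1 + (\<Sum>j=1..N+1. sg j * Phi e (hsv N H \<xi> i s j))) has_real_derivative
           0 + (sg i * Phid e (\<xi> i) + sg (N+1) * Phid e (H \<xi>) * Hd)) (at 0)"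
    by (rule DERIV_add[OF DERIV_const d])
  then have d2: "((\<lambda>s. mass e N (hsv N H \<xi> i s)) has_real_derivative
           sg i * Phid e (\<xi> i) + sg (N+1) * Phid e (H \<xi>) * Hd) (at 0)"
    unfolding m by (simp only: add_0_left)
  from ev obtain d0 where d0: "d0 > 0" "\<And>s. dist s 0 < d0 \<Longrightarrow> mass e N (hsv N H \<xi> i s) = \<mu>"
    unfolding eventually_nhds_metric hsv_def by blast
  show ?thesis
  proof (rule DERIV_local_const[OF d2 d0(1)], intro allI impI)
    fix y :: real assume "\<bar>0 - y\<bar> < d0"
    then show "mass e N (hsv N H \<xi> i 0) = mass e N (hsv N H \<xi> i y)"
      using d0(2)[of y] d0(2)[of 0] d0(1) by (simp add: dist_real_def)
  qed
qed

lemma sg_abs [simp]: "\<bar>sg j\<bar> = 1"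
  unfolding sg_def by (simp add: power_abs)

lemma sg_sq [simp]: "sg j * sg j = 1"
  unfolding sg_def by (simp add: power_mult_distrib[symmetric])

lemma sg_Suc: "sg (Suc j) = - sg j"
  unfolding sg_def by simp

lemma sum_sg_lt: "1 \<le> k \<Longrightarrow> (\<Sum>j\<in>{1..<k}. sg j) = (if even k then 1 else 0)"
proof (induction k)
  case 0 then show ?case by simp
next
  case (Suc k)
  show ?case
  proof (cases "k = 0")
    case True then show ?thesis by simp
  next
    case False
    then have "{1..<Suc k} = insert k {1..<k}" by auto
    then have "(\<Sum>j\<in>{1..<Suc k}. sg j) = sg k + (\<Sum>j\<in>{1..<k}. sg j)" by simp
    then show ?thesis using Suc False unfolding sg_def by (auto simp: even_Suc)
  qed
qed

lemma comb_sum: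
  assumes k: "1 \<le> k" "k \<le> M"
  shows "(\<Sum>j=1..M. (if j < k then 2 * sg j else if j = k then sg j else 0)) = 1"
proof -
  have "(\<Sum>j=1..M. (if j < k then 2 * sg j else if j = k then sg j else 0)) =
        (\<Sum>j\<in>{1..<k}. (if j < k then 2 * sg j else if j = k then sg j else 0)) +
        (\<Sum>j\<in>{k..M}. (if j < k then 2 * sg j else if j = k then sg j else 0))"
    using k by (metis (no_types, lifting) atLeastLessThanSuc_atLeastAtMost le_SucI sum.atLeastLessThan_concat Suc_le_mono less_eq_Suc_le not_less_eq_eq)
  also have "(\<Sum>j\<in>{1..<k}. (if j < k then 2 * sg j else if j = k then sg j else 0)) = 2 * (\<Sum>j\<in>{1..<k}. sg j)"
    by (simp add: sum_distrib_left)
  also have "(\<Sum>j\<in>{k..M}. (if j < k then 2 * sg j else if j = k then sg j else 0)) =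
             (\<Sum>j\<in>{k..M}. (if j = k then sg j else 0))"
    by (rule sum.cong) auto
  also have "\<dots> = sg k" using k by simp
  finally have "(\<Sum>j=1..M. (if j < k then 2 * sg j else if j = k then sg j else 0)) = 2 * (\<Sum>j\<in>{1..<k}. sg j) + sg k" .
  then show ?thesis using k by (simp only: sum_sg_lt) (auto simp: sg_def)
qed

definition fp :: "real \<Rightarrow> real" where "fp u = 3 * u^2 - 1"

lemma fAC_sg: "fAC (sg j * w) = sg j * fAC w"
proof -
  have "sg j ^ 3 = sg j" using sg_sq[of j] by (simp add: power3_eq_cube)
  then show ?thesis unfolding fAC_def by (simp add: power_mult_distrib algebra_simps)
qed

lemma fp_sg: "fp (sg j * w) = fp w"
  unfolding fp_def by (simp add: power_mult_distrib power2_eq_square[of "sg j"])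

lemma fAC_lip: assumes "\<bar>a\<bar> \<le> 1" "\<bar>r\<bar> \<le> 1" shows "\<bar>fAC (a + r) - fAC a\<bar> \<le> 8 * \<bar>r\<bar>"
proof -
  have eq: "fAC (a + r) - fAC a = r * (3 * (a * a) + 3 * (a * r) + r * r - 1)"
    unfolding fAC_def by (simp add: algebra_simps power3_eq_cube)
  have b1: "\<bar>a * a\<bar> \<le> 1" using mult_mono[OF assms(1) assms(1)] by (simp add: abs_mult)
  have b2: "\<bar>a * r\<bar> \<le> 1" using mult_mono[OF assms(1) assms(2)] by (simp add: abs_mult)
  have b3: "\<bar>r * r\<bar> \<le> 1" using mult_mono[OF assms(2) assms(2)] by (simp add: abs_mult)
  have "\<bar>3 * (a * a) + 3 * (a * r) + r * r - 1\<bar> \<le> 8" using b1 b2 b3 by linarith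
  then have "\<bar>r\<bar> * \<bar>3 * (a * a) + 3 * (a * r) + r * r - 1\<bar> \<le> \<bar>r\<bar> * 8"
    by (intro mult_left_mono) auto
  then show ?thesis unfolding eq abs_mult by simp
qed

lemma fp_lip: assumes "\<bar>a\<bar> \<le> 1" "\<bar>r\<bar> \<le> 1" shows "\<bar>fp (a + r) - fp a\<bar> \<le> 9 * \<bar>r\<bar>"
proof -
  have eq: "fp (a + r) - fp a = r * (6 * a + 3 * r)"
    unfolding fp_def by (simp add: algebra_simps power2_eq_square)
  have "\<bar>6 * a + 3 * r\<bar> \<le> 9" using assms by linarith
  then have "\<bar>r\<bar> * \<bar>6 * a + 3 * r\<bar> \<le> \<bar>r\<bar> * 9"
    by (intro mult_left_mono) auto
  then show ?thesis unfolding eq abs_mult by simp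
qed

lemma fp_bound: "\<bar>u\<bar> \<le> 2 \<Longrightarrow> \<bar>fp u\<bar> \<le> 13"
proof -
  assume "\<bar>u\<bar> \<le> 2"
  then have "u^2 \<le> 2^2" by (metis abs_le_square_iff abs_numeral)
  then have "u^2 \<le> 4" by simp
  then show ?thesis unfolding fp_def abs_le_iff using zero_le_power2[of u] by linarith
qed

lemma fp_bound1: "\<bar>u\<bar> \<le> 1 \<Longrightarrow> \<bar>fp u\<bar> \<le> 2"
proof -
  assume "\<bar>u\<bar> \<le> 1"
  then have "u^2 \<le> 1" by (simp add: abs_square_le_1)
  then show ?thesis unfolding fp_def abs_le_iff using zero_le_power2[of u] by linarith
qed

lemma T3_fp: "T3 y = fp (Uw y) * T1 y" unfolding T3_def fp_def ..
lemma T2_fAC: "T2 y = fAC (Uw y)" unfolding T2_def fAC_def ..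

lemma Uw_abs1: "\<bar>Uw y\<bar> \<le> 1" using Uw_abs[of y] by simp

locale PW =
  fixes e \<delta> :: real and N k :: nat and h :: "nat \<Rightarrow> real" and x :: real
  assumes e: "0 < e" "e \<le> 1" and k: "1 \<le> k" "k \<le> N+1" and x: "0 \<le> x" "x \<le> 1"
  and A1: "\<And>j. j \<in> {1..N+1} \<Longrightarrow> j \<noteq> k \<Longrightarrow> EE ((x - h j)/e) \<le> \<delta>"
  and A2: "\<And>j. j \<in> {1..N+1} \<Longrightarrow> j < k \<Longrightarrow> h j < x"
  and A3: "\<And>j. j \<in> {1..N+1} \<Longrightarrow> k < j \<Longrightarrow> x < h j"
  and A4: "\<And>j. j \<in> {1..N+1} \<Longrightarrow> EE (- h j/e) \<le> \<delta> \<and> EE ((1 - h j)/e) \<le> \<delta> \<and> 0 < h j \<and> h j < 1"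
  and A5: "1000 * (N+1) * \<delta> \<le> e^3"

context PW
begin

lemma dpos: "0 \<le> \<delta>"
  using A4[of 1] EE_pos[of "- h 1/e"] by auto

lemma dsmall: "\<delta> \<le> e / 1000"
proof -
  have "e^3 \<le> e" using e by (simp add: power_le_one power3_eq_cube mult_le_one)
  moreover have "1000 * \<delta> \<le> 1000 * (N+1) * \<delta>" using dpos by (simp add: mult_right_mono)
  ultimately show ?thesis using A5 by simp
qed

lemma d_le_de: "\<delta> \<le> \<delta> / e"
  using dpos e by (simp add: le_divide_eq mult_left_le)

lemma de_le_de2: "\<delta> / e \<le> \<delta> / e^2"
proof -
  have "e^2 \<le> e" using e by (simp add: power2_eq_square mult_le_one)
  then show ?thesis using dpos e by (intro divide_left_mono) auto
qed

definition cc :: "nat \<Rightarrow> real" where "cc j = (if j < k then sg j else if j = k then 0 else - sg j)"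

lemma Uw0_bound: "j \<in> {1..N+1} \<Longrightarrow> \<bar>Uw (- h j / e) + 1\<bar> \<le> \<delta>"
proof -
  assume j: "j \<in> {1..N+1}"
  have "- h j / e < 0" using A4[OF j] e by (simp add: divide_neg_pos)
  then have s: "sgn (- h j / e) = -1" by (rule sgn_neg)
  have "\<bar>Uw (- h j / e) - sgn (- h j / e)\<bar> \<le> EE (- h j / e)" using \<open>- h j / e < 0\<close> by (intro Uw_sgn) auto
  then have "\<bar>Uw (- h j / e) + 1\<bar> \<le> EE (- h j / e)" unfolding s by simp
  then show ?thesis using A4[OF j] by linarith
qed

lemma Uw1_bound: "j \<in> {1..N+1} \<Longrightarrow> \<bar>Uw ((1 - h j) / e) - 1\<bar> \<le> \<delta>"
proof -
  assume j: "j \<in> {1..N+1}"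
  have "(1 - h j) / e > 0" using A4[OF j] e by simp
  then have s: "sgn ((1 - h j) / e) = 1" by (rule sgn_pos)
  have "\<bar>Uw ((1 - h j) / e) - sgn ((1 - h j) / e)\<bar> \<le> EE ((1 - h j) / e)" using \<open>(1 - h j) / e > 0\<close> by (intro Uw_sgn) auto
  then have "\<bar>Uw ((1 - h j) / e) - 1\<bar> \<le> EE ((1 - h j) / e)" unfolding s by simp
  then show ?thesis using A4[OF j] by linarith
qed

lemma poly_bound: "j \<in> {1..N+1} \<Longrightarrow>
  \<bar>(- x * T1 (- h j/e) + x^2/2 * (T1 (- h j/e) - T1 ((1 - h j)/e))) / e\<bar> \<le> 2 * \<delta> / e"
proof -
  assume j: "j \<in> {1..N+1}"
  have a: "\<bar>T1 (- h j/e)\<bar> \<le> \<delta>" using T1_bound A4[OF j] order_trans by blast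
  have b: "\<bar>T1 ((1 - h j)/e)\<bar> \<le> \<delta>" using T1_bound A4[OF j] order_trans by blast
  have x2: "x^2 \<le> 1" using x by (simp add: power_le_one)
  have "\<bar>x * T1 (- h j/e)\<bar> \<le> \<delta>" using a x by (simp add: abs_mult mult_le_one) (metis abs_ge_zero mult_left_le_one_le order_trans)
  moreover have "\<bar>x^2/2 * (T1 (- h j/e) - T1 ((1 - h j)/e))\<bar> \<le> \<delta>"
  proof -
    have "\<bar>T1 (- h j/e) - T1 ((1 - h j)/e)\<bar> \<le> 2 * \<delta>" using a b by linarith
    then have "x^2/2 * \<bar>T1 (- h j/e) - T1 ((1 - h j)/e)\<bar> \<le> 1/2 * (2 * \<delta>)"
      using x2 by (intro mult_mono) auto
    then show ?thesis by (simp add: abs_mult)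
  qed
  ultimately have "\<bar>- x * T1 (- h j/e) + x^2/2 * (T1 (- h j/e) - T1 ((1 - h j)/e))\<bar> \<le> 2 * \<delta>" by linarith
  then have "\<bar>- x * T1 (- h j/e) + x^2/2 * (T1 (- h j/e) - T1 ((1 - h j)/e))\<bar> / e \<le> 2 * \<delta> / e"
    using e by (intro divide_right_mono) auto
  then show ?thesis using e by (simp add: abs_div)
qed


lemma sigma_bound: assumes j: "j \<in> {1..N+1}"
  shows "\<bar>Uw ((x - h j)/e) - (if j < k then 1 else if j = k then Uw ((x - h j)/e) else -1)\<bar> \<le> \<delta>"
proof -
  consider "j < k" | "j = k" | "k < j" by linarith
  then show ?thesis
  proof cases
    case 1
    then have "(x - h j)/e > 0" using A2[OF j] e by simp
    then have s: "sgn ((x - h j)/e) = 1" by (rule sgn_pos)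
    have "\<bar>Uw ((x - h j)/e) - sgn ((x - h j)/e)\<bar> \<le> EE ((x - h j)/e)"
      using \<open>(x - h j)/e > 0\<close> by (intro Uw_sgn) auto
    then show ?thesis unfolding s using 1 A1[OF j] by simp
  next
    case 2 then show ?thesis using dpos by simp
  next
    case 3
    then have "(x - h j)/e < 0" using A3[OF j] e by (simp add: divide_neg_pos)
    then have s: "sgn ((x - h j)/e) = -1" by (rule sgn_neg)
    have "\<bar>Uw ((x - h j)/e) - sgn ((x - h j)/e)\<bar> \<le> EE ((x - h j)/e)"
      using \<open>(x - h j)/e < 0\<close> by (intro Uw_sgn) auto
    then show ?thesis unfolding s using 3 A1[OF j] by simp
  qed
qed

lemma err_bound: assumes j: "j \<in> {1..N+1}"
  shows "\<bar>sg j * phi e (h j) x - (if j = k then sg k * Uw ((x - h k)/e) else 0) - (cc j + sg j)\<bar> \<le> 4 * \<delta> / e"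
proof -
  define y where "y = (x - h j)/e"
  define P where "P = (- x * T1 (- h j/e) + x^2/2 * (T1 (- h j/e) - T1 ((1 - h j)/e))) / e"
  define \<sigma> where "\<sigma> = (if j < k then 1 else if j = k then Uw y else -1)"
  have ph: "phi e (h j) x = Uw y - Uw (- h j/e) + P"
    unfolding phi_def y_def P_def using e by (simp add: field_simps)
  have eq: "sg j * phi e (h j) x - (if j = k then sg k * Uw ((x - h k)/e) else 0) - (cc j + sg j)
      = sg j * (Uw y - \<sigma>) - sg j * (Uw (- h j/e) + 1) + sg j * P"
  proof -
    consider "j < k" | "j = k" | "k < j" by linarith
    then show ?thesis unfolding ph
      by cases (simp_all add: cc_def \<sigma>_def y_def algebra_simps)
  qed
  have b1: "\<bar>sg j * (Uw y - \<sigma>)\<bar> \<le> \<delta>" using sigma_bound[OF j] unfolding y_def \<sigma>_def by (simp add: abs_mult)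
  have b2: "\<bar>sg j * (Uw (- h j/e) + 1)\<bar> \<le> \<delta>" using Uw0_bound[OF j] by (simp add: abs_mult)
  have b3: "\<bar>sg j * P\<bar> \<le> 2 * \<delta> / e" using poly_bound[OF j] unfolding P_def by (simp add: abs_mult)
  have "\<bar>sg j * (Uw y - \<sigma>) - sg j * (Uw (- h j/e) + 1) + sg j * P\<bar> \<le> \<delta> + \<delta> + 2 * \<delta> / e"
    using b1 b2 b3 by linarith
  also have "\<dots> \<le> 4 * \<delta> / e" using d_le_de by simp
  finally show ?thesis unfolding eq .
qed

lemma cc_sum: "(\<Sum>j=1..N+1. cc j + sg j) = 1"
proof -
  have "(\<Sum>j=1..N+1. cc j + sg j) = (\<Sum>j=1..N+1. (if j < k then 2 * sg j else if j = k then sg j else 0))"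
    by (rule sum.cong) (auto simp: cc_def)
  also have "\<dots> = 1" by (rule comb_sum[OF k])
  finally show ?thesis .
qed

definition Ux :: real where "Ux = -1 + (\<Sum>j=1..N+1. sg j * phi e (h j) x)"
definition ak :: real where "ak = sg k * Uw ((x - h k)/e)"

lemma ak_bound: "\<bar>ak\<bar> \<le> 1" unfolding ak_def using Uw_abs1 by (simp add: abs_mult)

lemma rho_bound: "\<bar>Ux - ak\<bar> \<le> 4 * (N+1) * \<delta> / e"
proof -
  have kin: "k \<in> {1..N+1}" using k by simp
  have "(\<Sum>j=1..N+1. sg j * phi e (h j) x - (if j = k then sg k * Uw ((x - h k)/e) else 0) - (cc j + sg j))
      = (\<Sum>j=1..N+1. sg j * phi e (h j) x) - (\<Sum>j=1..N+1. (if j = k then sg k * Uw ((x - h k)/e) else 0)) - (\<Sum>j=1..N+1. cc j + sg j)"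
    by (simp add: sum_subtractf)
  also have "\<dots> = Ux - ak"
    unfolding cc_sum Ux_def ak_def using kin by (simp add: sum.delta)
  finally have eq: "Ux - ak = (\<Sum>j=1..N+1. sg j * phi e (h j) x - (if j = k then sg k * Uw ((x - h k)/e) else 0) - (cc j + sg j))" by simp
  have "\<bar>Ux - ak\<bar> \<le> (\<Sum>j=1..N+1. \<bar>sg j * phi e (h j) x - (if j = k then sg k * Uw ((x - h k)/e) else 0) - (cc j + sg j)\<bar>)"
    unfolding eq by (rule sum_abs)
  also have "\<dots> \<le> (\<Sum>j=1..N+1. 4 * \<delta> / e)"
    by (rule sum_mono) (rule err_bound, simp)
  also have "\<dots> = 4 * (N+1) * \<delta> / e" by simp
  finally show ?thesis .
qed

lemma R_small: "4 * (N+1) * \<delta> / e \<le> 1 / 100"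
proof -
  have "e^3 \<le> e" using e by (simp add: power3_eq_cube mult_le_one)
  have "4 * (N+1) * \<delta> = (1000 * (N+1) * \<delta>) / 250" by simp
  also have "\<dots> \<le> e^3 / 250" by (rule divide_right_mono[OF A5]) simp
  finally have "4 * (N+1) * \<delta> \<le> e^3 / 250" .
  also have "\<dots> \<le> e / 100" using \<open>e^3 \<le> e\<close> e by simp
  finally show ?thesis using e by (simp add: divide_le_eq)
qed

lemma Ux_bound: "\<bar>Ux\<bar> \<le> 2"
  using rho_bound R_small ak_bound by linarith

lemma phixx_eq: "e^2 * phixx e t x = T2 ((x - t)/e) + e * (T1 (-t/e) - T1 ((1-t)/e))"
  unfolding phixx_def using e by (simp add: field_simps power2_eq_square)

lemma err2: assumes j: "j \<in> {1..N+1}"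
  shows "\<bar>sg j * (e^2 * phixx e (h j) x) - (if j = k then sg k * T2 ((x - h k)/e) else 0)\<bar> \<le> 3 * \<delta>"
proof -
  have a: "\<bar>T1 (- h j/e)\<bar> \<le> \<delta>" using T1_bound A4[OF j] order_trans by blast
  have b: "\<bar>T1 ((1 - h j)/e)\<bar> \<le> \<delta>" using T1_bound A4[OF j] order_trans by blast
  have c: "\<bar>e * (T1 (- h j/e) - T1 ((1 - h j)/e))\<bar> \<le> 2 * \<delta>"
  proof -
    have "\<bar>T1 (- h j/e) - T1 ((1 - h j)/e)\<bar> \<le> 2 * \<delta>" using a b by linarith
    then have "e * \<bar>T1 (- h j/e) - T1 ((1 - h j)/e)\<bar> \<le> 1 * (2 * \<delta>)"
      using e by (intro mult_mono) auto
    then show ?thesis using e by (simp add: abs_mult)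
  qed
  show ?thesis
  proof (cases "j = k")
    case True
    have "sg j * (e^2 * phixx e (h j) x) - (if j = k then sg k * T2 ((x - h k)/e) else 0)
       = sg k * (e * (T1 (- h j/e) - T1 ((1 - h j)/e)))"
      unfolding phixx_eq using True by (simp add: algebra_simps)
    then show ?thesis using c dpos by (simp add: abs_mult)
  next
    case False
    have "\<bar>T2 ((x - h j)/e)\<bar> \<le> \<delta>" using T2_bound A1[OF j False] order_trans by blast
    then have "\<bar>T2 ((x - h j)/e) + e * (T1 (- h j/e) - T1 ((1 - h j)/e))\<bar> \<le> 3 * \<delta>" using c by linarith
    then show ?thesis unfolding phixx_eq using False by (simp add: abs_mult)
  qed
qed

definition Uppx :: real where "Uppx = (\<Sum>j=1..N+1. sg j * phixx e (h j) x)"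

lemma L_bound: "\<bar>e^2 * Uppx - fAC Ux\<bar> \<le> 35 * (N+1) * \<delta> / e"
proof -
  have kin: "k \<in> {1..N+1}" using k by simp
  have eq: "e^2 * Uppx - sg k * T2 ((x - h k)/e) =
     (\<Sum>j=1..N+1. sg j * (e^2 * phixx e (h j) x) - (if j = k then sg k * T2 ((x - h k)/e) else 0))"
    unfolding Uppx_def using kin by (simp add: sum_subtractf sum_distrib_left sum.delta algebra_simps)
  have "\<bar>e^2 * Uppx - sg k * T2 ((x - h k)/e)\<bar> \<le> (\<Sum>j=1..N+1. 3 * \<delta>)"
    unfolding eq by (rule order_trans[OF sum_abs sum_mono]) (rule err2, simp)
  then have s1: "\<bar>e^2 * Uppx - fAC ak\<bar> \<le> 3 * (N+1) * \<delta>"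
    unfolding ak_def fAC_sg T2_fAC by (simp add: algebra_simps)
  have r: "\<bar>Ux - ak\<bar> \<le> 1" using rho_bound R_small by linarith
  have "\<bar>fAC Ux - fAC ak\<bar> = \<bar>fAC (ak + (Ux - ak)) - fAC ak\<bar>" by simp
  also have "\<dots> \<le> 8 * \<bar>Ux - ak\<bar>" by (rule fAC_lip[OF ak_bound r])
  also have "\<dots> \<le> 8 * (4 * (N+1) * \<delta> / e)" using rho_bound by (intro mult_left_mono) auto
  also have "\<dots> = 32 * (N+1) * \<delta> / e" by simp
  finally have s2: "\<bar>fAC Ux - fAC ak\<bar> \<le> 32 * (N+1) * \<delta> / e" .
  have s3: "3 * (N+1) * \<delta> \<le> 3 * (N+1) * \<delta> / e"
  proof -
    have "3 * (N+1) * \<delta> \<le> 3 * (N+1) * (\<delta> / e)" using d_le_de by (intro mult_left_mono) auto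
    then show ?thesis by simp
  qed
  have "\<bar>e^2 * Uppx - fAC Ux\<bar> \<le> \<bar>e^2 * Uppx - fAC ak\<bar> + \<bar>fAC Ux - fAC ak\<bar>" by linarith
  also have "\<dots> \<le> 3 * (N+1) * \<delta> / e + 32 * (N+1) * \<delta> / e" using s1 s2 s3 by linarith
  also have "\<dots> = 35 * (N+1) * \<delta> / e" using e by (simp add: field_simps)
  finally show ?thesis .
qed

end

context PW
begin

definition Rt :: "real \<Rightarrow> real" where
  "Rt t = T1 (-t/e) / e + (x * T2 (-t/e) - x^2/2 * (T2 (-t/e) - T2 ((1-t)/e))) / e^2"

lemma phit_split: "phit e t x = - (T1 ((x-t)/e) / e) + Rt t"
  unfolding phit_def Rt_def by (simp add: diff_divide_distrib)

lemma de2_pos: "0 \<le> \<delta> / e^2" using dpos e by simp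

lemma d_le_de2: "\<delta> \<le> \<delta> / e^2" using d_le_de de_le_de2 by linarith

lemma Rt_bound: assumes j: "j \<in> {1..N+1}" shows "\<bar>Rt (h j)\<bar> \<le> 3 * \<delta> / e^2"
proof -
  have a: "\<bar>T1 (- h j/e)\<bar> \<le> \<delta>" using T1_bound A4[OF j] order_trans by blast
  have b: "\<bar>T2 (- h j/e)\<bar> \<le> \<delta>" using T2_bound A4[OF j] order_trans by blast
  have c: "\<bar>T2 ((1 - h j)/e)\<bar> \<le> \<delta>" using T2_bound A4[OF j] order_trans by blast
  have x2: "x^2 \<le> 1" using x by (simp add: power_le_one)
  have "\<bar>x * T2 (- h j/e)\<bar> \<le> \<delta>"
  proof -
    have "\<bar>x\<bar> * \<bar>T2 (- h j/e)\<bar> \<le> 1 * \<delta>" using x b by (intro mult_mono) auto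
    then show ?thesis by (simp add: abs_mult)
  qed
  moreover have "\<bar>x^2/2 * (T2 (- h j/e) - T2 ((1 - h j)/e))\<bar> \<le> \<delta>"
  proof -
    have "\<bar>T2 (- h j/e) - T2 ((1 - h j)/e)\<bar> \<le> 2 * \<delta>" using b c by linarith
    then have "x^2/2 * \<bar>T2 (- h j/e) - T2 ((1 - h j)/e)\<bar> \<le> 1/2 * (2 * \<delta>)"
      using x2 by (intro mult_mono) auto
    then show ?thesis by (simp add: abs_mult)
  qed
  ultimately have p: "\<bar>x * T2 (- h j/e) - x^2/2 * (T2 (- h j/e) - T2 ((1 - h j)/e))\<bar> \<le> 2 * \<delta>" by linarith
  have p2: "\<bar>(x * T2 (- h j/e) - x^2/2 * (T2 (- h j/e) - T2 ((1 - h j)/e))) / e^2\<bar> \<le> 2 * (\<delta> / e^2)"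
    using p e by (simp add: abs_div divide_right_mono)
  have p1: "\<bar>T1 (- h j/e) / e\<bar> \<le> \<delta> / e^2"
  proof -
    have "\<bar>T1 (- h j/e) / e\<bar> \<le> \<delta> / e" using a e by (simp add: abs_div divide_right_mono)
    then show ?thesis using de_le_de2 by linarith
  qed
  have "\<bar>Rt (h j)\<bar> \<le> \<delta> / e^2 + 2 * (\<delta> / e^2)" unfolding Rt_def
    by (rule order_trans[OF abs_triangle_ineq]) (use p1 p2 in linarith)
  also have "\<dots> = 3 * \<delta> / e^2" by simp
  finally show ?thesis .
qed

lemma T1e_bound: "\<bar>T1 y / e\<bar> \<le> 1 / e"
  using T1_bound[of y] EE_le1[of y] e by (simp add: abs_div divide_right_mono)

lemma phit_bound: assumes j: "j \<in> {1..N+1}" shows "\<bar>phit e (h j) x\<bar> \<le> 2 / e"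
proof -
  have "3 * \<delta> / e^2 \<le> 1 / e"
  proof -
    have "3 * \<delta> \<le> e" using dsmall dpos by linarith
    then have "3 * \<delta> / e^2 \<le> e / e^2" using e by (simp add: divide_right_mono)
    also have "e / e^2 = 1 / e" using e by (simp add: power2_eq_square)
    finally show ?thesis .
  qed
  then show ?thesis unfolding phit_split using Rt_bound[OF j] T1e_bound[of "(x - h j)/e"] by linarith
qed

lemma phitxx_eq: "e^2 * phitxx e t x = - (T3 ((x-t)/e) / e) - (T2 (-t/e) - T2 ((1-t)/e))"
  unfolding phitxx_def using e by (simp add: field_simps power2_eq_square power3_eq_cube)

lemma key_identity: "e^2 * phitxx e t x - fp Ux * phit e t x =
   (fp Ux - fp (Uw ((x-t)/e))) * (T1 ((x-t)/e) / e) - (T2 (-t/e) - T2 ((1-t)/e)) - fp Ux * Rt t"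
  unfolding phitxx_eq phit_split T3_fp by (simp add: algebra_simps)

lemma n1: "1 \<le> real (N+1)" by simp

lemma fpdiff_bound: assumes j: "j \<in> {1..N+1}"
  shows "\<bar>(fp Ux - fp (Uw ((x - h j)/e))) * (T1 ((x - h j)/e) / e)\<bar> \<le> 36 * (N+1) * \<delta> / e^2"
proof (cases "j = k")
  case True
  have fa: "fp (Uw ((x - h j)/e)) = fp ak" unfolding ak_def fp_sg True ..
  have r: "\<bar>Ux - ak\<bar> \<le> 1" using rho_bound R_small by linarith
  have "\<bar>fp Ux - fp ak\<bar> = \<bar>fp (ak + (Ux - ak)) - fp ak\<bar>" by simp
  also have "\<dots> \<le> 9 * \<bar>Ux - ak\<bar>" by (rule fp_lip[OF ak_bound r])
  also have "\<dots> \<le> 9 * (4 * (N+1) * \<delta> / e)" using rho_bound by (intro mult_left_mono) auto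
  also have "\<dots> = 36 * (N+1) * \<delta> / e" by simp
  finally have f1: "\<bar>fp Ux - fp ak\<bar> \<le> 36 * (N+1) * \<delta> / e" .
  have "\<bar>(fp Ux - fp ak) * (T1 ((x - h j)/e) / e)\<bar> \<le> (36 * (N+1) * \<delta> / e) * (1 / e)"
    unfolding abs_mult by (intro mult_mono f1 T1e_bound) (use dpos e in auto)
  also have "\<dots> = 36 * (N+1) * \<delta> / e^2" by (simp add: power2_eq_square)
  finally show ?thesis unfolding fa .
next
  case False
  have f1: "\<bar>fp Ux - fp (Uw ((x - h j)/e))\<bar> \<le> 15"
    using fp_bound[OF Ux_bound] fp_bound1[OF Uw_abs1, of "(x - h j)/e"] by linarith
  have t1: "\<bar>T1 ((x - h j)/e) / e\<bar> \<le> \<delta> / e"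
    using T1_bound[of "(x - h j)/e"] A1[OF j False] e by (simp add: abs_div divide_right_mono)
  have "\<bar>(fp Ux - fp (Uw ((x - h j)/e))) * (T1 ((x - h j)/e) / e)\<bar> \<le> 15 * (\<delta> / e)"
    unfolding abs_mult by (intro mult_mono f1 t1) auto
  also have "\<dots> \<le> 15 * (\<delta> / e^2)" using de_le_de2 by simp
  also have "\<dots> \<le> 36 * (N+1) * (\<delta> / e^2)"
    using de2_pos n1 by (intro mult_right_mono) auto
  finally show ?thesis by simp
qed

lemma phitxx_bound: assumes j: "j \<in> {1..N+1}"
  shows "\<bar>e^2 * phitxx e (h j) x - fp Ux * phit e (h j) x\<bar> \<le> 100 * (N+1) * \<delta> / e^2"
proof -
  have b: "\<bar>T2 (- h j/e)\<bar> \<le> \<delta>" using T2_bound A4[OF j] order_trans by blast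
  have c: "\<bar>T2 ((1 - h j)/e)\<bar> \<le> \<delta>" using T2_bound A4[OF j] order_trans by blast
  have t2: "\<bar>T2 (- h j/e) - T2 ((1 - h j)/e)\<bar> \<le> 2 * (\<delta> / e^2)" using b c d_le_de2 by linarith
  have fr: "\<bar>fp Ux * Rt (h j)\<bar> \<le> 13 * (3 * \<delta> / e^2)"
    unfolding abs_mult by (intro mult_mono fp_bound[OF Ux_bound] Rt_bound[OF j]) auto
  have "\<bar>e^2 * phitxx e (h j) x - fp Ux * phit e (h j) x\<bar> \<le>
        36 * (N+1) * \<delta> / e^2 + 2 * (\<delta> / e^2) + 13 * (3 * \<delta> / e^2)"
    unfolding key_identity using fpdiff_bound[OF j] t2 fr by linarith
  also have "\<dots> = (36 * (N+1) + 41) * (\<delta> / e^2)" using e by (simp add: field_simps)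
  also have "\<dots> \<le> (100 * (N+1)) * (\<delta> / e^2)"
    using de2_pos n1 by (intro mult_right_mono) auto
  finally show ?thesis by simp
qed

end

lemma Phid_bound:
  assumes e: "0 < e" "e \<le> 1" and a: "EE (-t/e) \<le> \<delta>" and b: "EE ((1-t)/e) \<le> \<delta>"
    and t: "0 < t" "t < 1" and sm: "8 * \<delta> \<le> e^2"
  shows "\<bar>Phid e t + 2\<bar> \<le> 1/2"
proof -
  have dpos: "0 \<le> \<delta>" using a EE_pos[of "-t/e"] by linarith
  have n1: "-t/e < 0" using e t by (simp add: divide_neg_pos)
  then have s1: "sgn (-t/e) = -1" by (rule sgn_neg)
  have "\<bar>Uw (-t/e) - sgn (-t/e)\<bar> \<le> EE (-t/e)" using n1 by (intro Uw_sgn) auto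
  then have u1: "\<bar>Uw (-t/e) + 1\<bar> \<le> \<delta>" unfolding s1 using a by simp
  have p1: "(1-t)/e > 0" using e t by simp
  then have s2: "sgn ((1-t)/e) = 1" by (rule sgn_pos)
  have "\<bar>Uw ((1-t)/e) - sgn ((1-t)/e)\<bar> \<le> EE ((1-t)/e)" using p1 by (intro Uw_sgn) auto
  then have u2: "\<bar>Uw ((1-t)/e) - 1\<bar> \<le> \<delta>" unfolding s2 using b by simp
  have ta: "\<bar>T1 (-t/e)\<bar> \<le> \<delta>" using T1_bound a order_trans by blast
  have tb: "\<bar>T2 (-t/e)\<bar> \<le> \<delta>" using T2_bound a order_trans by blast
  have tc: "\<bar>T2 ((1-t)/e)\<bar> \<le> \<delta>" using T2_bound b order_trans by blast
  have te: "\<bar>T1 (-t/e) * e\<bar> \<le> \<delta>"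
  proof -
    have "\<bar>T1 (-t/e)\<bar> * \<bar>e\<bar> \<le> \<delta> * 1" using ta e by (intro mult_mono) auto
    then show ?thesis by (simp add: abs_mult)
  qed
  define Q where "Q = T1 (-t/e) * e + T2 (-t/e) / 2 - (T2 (-t/e) - T2 ((1-t)/e)) / 6"
  have gen: "\<And>(A::real) (B::real) (C::real) (d::real). \<bar>A\<bar> \<le> d \<Longrightarrow> \<bar>B\<bar> \<le> d \<Longrightarrow> \<bar>C\<bar> \<le> d \<Longrightarrow> \<bar>A + B/2 - (B - C)/6\<bar> \<le> 2*d"
  proof -
    fix A B C d :: real assume "\<bar>A\<bar> \<le> d" "\<bar>B\<bar> \<le> d" "\<bar>C\<bar> \<le> d"
    moreover have "A + B/2 - (B - C)/6 = A + B/3 + C/6" by (simp add: field_simps)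
    ultimately show "\<bar>A + B/2 - (B - C)/6\<bar> \<le> 2*d" by arith
  qed
  have q: "\<bar>Q\<bar> \<le> 2 * \<delta>" unfolding Q_def by (rule gen[OF te tb tc])
  have eq: "Phid e t + 2 = (1 - Uw ((1-t)/e)) + (Uw (-t/e) + 1) + Q / e^2"
    unfolding Phid_def Q_def using e by (simp add: field_simps power2_eq_square)
  have e2: "e^2 \<le> 1" using e by (simp add: power_le_one)
  have "\<bar>Q / e^2\<bar> \<le> 2 * \<delta> / e^2" using q e by (simp add: abs_div divide_right_mono)
  also have "\<dots> \<le> 1/4" using sm e by (simp add: divide_le_eq)
  finally have q2: "\<bar>Q / e^2\<bar> \<le> 1/4" .
  have "2 * \<delta> \<le> 1/4" using sm e2 by linarith
  then show ?thesis unfolding eq using u1 u2 q2 by arith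
qed

lemma Phid_bounds:
  assumes "\<bar>Phid e t + 2\<bar> \<le> 1/2"
  shows "\<bar>Phid e t\<bar> \<le> 5/2" "3/2 \<le> \<bar>Phid e t\<bar>"
  using assms by arith+

lemma Hd_bound:
  assumes rel: "sg i * a + sg (N+1) * b * Hd = 0" and a: "\<bar>a\<bar> \<le> 5/2" and b: "3/2 \<le> \<bar>b\<bar>"
  shows "\<bar>Hd\<bar> \<le> 2"
proof -
  have "\<bar>sg (N+1) * b * Hd\<bar> = \<bar>sg i * a\<bar>" using rel by (simp add: eq_neg_iff_add_eq_0[symmetric] add.commute)
  then have "\<bar>b\<bar> * \<bar>Hd\<bar> = \<bar>a\<bar>" by (simp add: abs_mult)
  then have "\<bar>b\<bar> * \<bar>Hd\<bar> \<le> 5/2" using a by simp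
  moreover have "3/2 * \<bar>Hd\<bar> \<le> \<bar>b\<bar> * \<bar>Hd\<bar>" using b by (intro mult_right_mono) auto
  ultimately show ?thesis by linarith
qed

lemma omega_facts:
  assumes h: "h \<in> Omega e \<rho> N" and D0: "0 < e/\<rho>"
  shows "\<And>j. j \<in> {1..N+1} \<Longrightarrow> e/\<rho>/2 < h j \<and> h j < 1 - e/\<rho>/2"
    and "\<And>j k. 1 \<le> j \<Longrightarrow> j < k \<Longrightarrow> k \<le> N+1 \<Longrightarrow> h j + e/\<rho> < h k"
proof -
  define D where "D = e/\<rho>"
  have h1: "0 < h 1" and hm: "\<And>j. j \<in> {1..N} \<Longrightarrow> h j < h (j+1)" and hN: "h (N+1) < 1"
    and gap: "\<And>j. j \<in> {0..N+1} \<Longrightarrow> \<bar>hext N h (j+1) - hext N h j\<bar> > D"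
    using h unfolding Omega_def D_def by auto
  have step: "h j + D < h (j+1)" if "j \<in> {1..N}" for j
  proof -
    have "\<bar>hext N h (j+1) - hext N h j\<bar> > D" using gap[of j] that by auto
    moreover have "hext N h (j+1) = h (j+1)" "hext N h j = h j" using that unfolding hext_def by auto
    ultimately show ?thesis using hm[OF that] by simp
  qed
  have chain: "h j + D < h (j + 1 + d)" if "1 \<le> j" "j + 1 + d \<le> N+1" for j d
    using that
  proof (induction d)
    case 0 then show ?case using step[of j] by simp
  next
    case (Suc d)
    then have "h j + D < h (j + 1 + d)" by simp
    moreover have "h (j + 1 + d) < h (j + 1 + d + 1)" using hm[of "j+1+d"] Suc.prems by simp
    ultimately show ?case by simp
  qed
  show ch: "h j + e/\<rho> < h k" if "1 \<le> j" "j < k" "k \<le> N+1" for j k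
  proof -
    obtain d where "k = j + 1 + d" using \<open>j < k\<close> by (metis add_Suc less_iff_Suc_add Suc_eq_plus1)
    then show ?thesis using chain[of j d] that unfolding D_def by simp
  qed
  have lo: "D/2 < h 1"
  proof -
    have "\<bar>hext N h (0+1) - hext N h 0\<bar> > D" using gap[of 0] by simp
    moreover have "hext N h 1 = h 1" "hext N h 0 = - h 1" unfolding hext_def by auto
    ultimately show ?thesis using h1 by simp
  qed
  have hi: "h (N+1) < 1 - D/2"
  proof -
    have "\<bar>hext N h (N+1+1) - hext N h (N+1)\<bar> > D" using gap[of "N+1"] by simp
    moreover have "hext N h (N+1+1) = 2 - h (N+1)" "hext N h (N+1) = h (N+1)" unfolding hext_def by auto
    ultimately show ?thesis using hN by simp
  qed
  have mono: "h 1 \<le> h j \<and> h j \<le> h (N+1)" if "j \<in> {1..N+1}" for j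
  proof -
    have D0: "0 < D" using D0 unfolding D_def .
    have "h 1 \<le> h j"
      using ch[of 1 j] that D0 unfolding D_def by (cases "j = 1") auto
    moreover have "h j \<le> h (N+1)"
      using ch[of j "N+1"] that D0 unfolding D_def by (cases "j = N+1") auto
    ultimately show ?thesis ..
  qed
  show "e/\<rho>/2 < h j \<and> h j < 1 - e/\<rho>/2" if "j \<in> {1..N+1}" for j
    using mono[OF that] lo hi unfolding D_def by auto
qed

lemma closest:
  fixes h :: "nat \<Rightarrow> real"
  assumes D: "0 < D" and ch: "\<And>j k. 1 \<le> j \<Longrightarrow> j < k \<Longrightarrow> k \<le> N+1 \<Longrightarrow> h j + D < h k"
  shows "\<exists>k\<in>{1..N+1}. (\<forall>j\<in>{1..N+1}. j \<noteq> k \<longrightarrow> D/2 \<le> \<bar>x - h j\<bar>) \<and>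
            (\<forall>j\<in>{1..N+1}. j < k \<longrightarrow> h j < x) \<and> (\<forall>j\<in>{1..N+1}. k < j \<longrightarrow> x < h j)"
proof -
  define S where "S = {1..N+1}"
  define f where "f j = \<bar>x - h j\<bar>" for j
  have fin: "finite (f ` S)" "f ` S \<noteq> {}" unfolding S_def by auto
  obtain k where k: "k \<in> S" "f k = Min (f ` S)" using Min_in[OF fin] by auto
  have kmin: "f k \<le> f j" if "j \<in> S" for j using k(2) Min_le[OF fin(1)] that by simp
  have far: "D < \<bar>h j - h k\<bar>" if "j \<in> S" "j \<noteq> k" for j
  proof (cases "j < k")
    case True then show ?thesis using ch[of j k] that k(1) unfolding S_def by auto
  next
    case False then have "k < j" using that by simp
    then show ?thesis using ch[of k j] that k(1) unfolding S_def by auto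
  qed
  show ?thesis
  proof (intro bexI[of _ k] conjI ballI impI)
    show "k \<in> {1..N+1}" using k(1) unfolding S_def .
  next
    fix j assume j: "j \<in> {1..N+1}" "j \<noteq> k"
    have "\<bar>h j - h k\<bar> \<le> f j + f k" unfolding f_def by arith
    then show "D/2 \<le> \<bar>x - h j\<bar>" using far[of j] kmin[of j] j unfolding S_def f_def by auto
  next
    fix j assume j: "j \<in> {1..N+1}" "j < k"
    have "h j + D < h k" using ch[of j k] j k(1) unfolding S_def by auto
    show "h j < x"
    proof (rule ccontr)
      assume "\<not> h j < x"
      then have "f j < f k" unfolding f_def using \<open>h j + D < h k\<close> D by auto
      then show False using kmin[of j] j unfolding S_def by auto
    qed
  next
    fix j assume j: "j \<in> {1..N+1}" "k < j"
    have "h k + D < h j" using ch[of k j] j k(1) unfolding S_def by auto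
    show "x < h j"
    proof (rule ccontr)
      assume "\<not> x < h j"
      then have "f j < f k" unfolding f_def using \<open>h k + D < h j\<close> D by auto
      then show False using kmin[of j] j unfolding S_def by auto
    qed
  qed
qed

lemma EE_le_delta: "c \<le> \<bar>y\<bar> \<Longrightarrow> EE y \<le> 4 * exp (- c)"
  using EE_exp[of y] by (smt (verit, best) exp_le_cancel_iff)

lemma exp_ge_pow: assumes "0 \<le> z" "1 \<le> n" shows "(z / real n) ^ n \<le> exp z"
proof -
  have "(z / real n) ^ n \<le> (1 + z / real n) ^ n" using assms by (intro power_mono) auto
  also have "\<dots> \<le> exp (z / real n) ^ n" using assms by (intro power_mono exp_ge_add_one_self) (auto simp: add_nonneg_nonneg)
  also have "\<dots> = exp z" using assms by (simp add: exp_of_nat_mult[symmetric])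
  finally show ?thesis .
qed

lemma small_exp:
  fixes k0 M K :: real
  assumes k0: "0 < k0" and M: "0 < M" and K: "0 < K"
  shows "\<exists>e0>0. \<forall>e. 0 < e \<and> e < e0 \<longrightarrow> K * (4 * exp (- (e / e powr k0 / 2 / e))) \<le> e powr M"
proof -
  define n :: nat where "n = nat (ceiling ((M+1)/k0)) + 1"
  have n1: "1 \<le> n" unfolding n_def by simp
  have nk: "M + 1 \<le> real n * k0"
  proof -
    have "(M+1)/k0 \<le> real (nat (ceiling ((M+1)/k0)))" by linarith
    also have "\<dots> \<le> real n" unfolding n_def by simp
    finally show ?thesis using k0 by (simp add: divide_le_eq)
  qed
  define B where "B = 4 * K * (2 * real n) ^ n"
  have B: "0 < B" unfolding B_def using K n1 by simp
  show ?thesis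
  proof (intro exI[of _ "min 1 (1/B)"] conjI allI impI)
    show "0 < min 1 (1/B)" using B by simp
  next
    fix e :: real assume e: "0 < e \<and> e < min 1 (1/B)"
    define p where "p = e powr k0"
    have p: "0 < p" unfolding p_def using e by simp
    define z where "z = 1 / (2 * p)"
    have z: "0 < z" unfolding z_def using p by simp
    have zeq: "e / e powr k0 / 2 / e = z" unfolding z_def p_def using e by (simp add: field_simps)
    have "(z / real n) ^ n \<le> exp z" using exp_ge_pow z n1 by simp
    then have "exp (- z) \<le> 1 / (z / real n) ^ n"
      using z n1 by (simp add: exp_minus divide_simps) (metis exp_gt_zero less_le mult.commute)
    also have "1 / (z / real n) ^ n = (2 * real n) ^ n * p ^ n"
      unfolding z_def using p n1 by (simp add: field_simps power_divide power_mult_distrib)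
    finally have ex: "exp (- z) \<le> (2 * real n) ^ n * p ^ n" .
    have "p ^ n = e powr (real n * k0)" unfolding p_def using e by (simp add: powr_power)
    also have "\<dots> \<le> e powr (M + 1)" using e nk by (intro powr_mono') auto
    also have "\<dots> = e powr M * e" using e by (simp add: powr_add)
    finally have pn: "p ^ n \<le> e powr M * e" .
    have "K * (4 * exp (- z)) \<le> K * (4 * ((2 * real n) ^ n * (e powr M * e)))"
      using ex pn K n1 by (intro mult_left_mono order_trans[OF ex]) auto
    also have "\<dots> = e powr M * (B * e)" unfolding B_def by (simp add: algebra_simps)
    also have "\<dots> \<le> e powr M * 1"
    proof -
      have "B * e \<le> 1" using e B by (simp add: field_simps)
      then show ?thesis using e by (intro mult_left_mono) auto
    qed
    finally show "K * (4 * exp (- (e / e powr k0 / 2 / e))) \<le> e powr M" unfolding zeq by simp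
  qed
qed

lemma amgm3: fixes v t :: real assumes t: "0 < t" shows "\<bar>v\<bar>^3 \<le> (t * v^2 + v^4 / t) / 2"
proof -
  define w where "w = \<bar>v\<bar>"
  have v2: "v^2 = w^2" and v4: "v^4 = w^4" unfolding w_def by (simp_all add: power_even_abs)
  have "0 \<le> w^2 * (t - w)^2" by simp
  also have "w^2 * (t - w)^2 = t^2 * w^2 - 2 * t * w^3 + w^4" by algebra
  finally have "2 * t * w^3 \<le> t^2 * w^2 + w^4" by simp
  then have A: "w^3 \<le> (t^2 * w^2 + w^4) / (2 * t)" using t by (simp add: le_divide_eq algebra_simps)
  have B: "(t^2 * w^2 + w^4) / (2 * t) = (t * w^2 + w^4 / t) / 2" using t by (simp add: field_simps power2_eq_square)
  have "w^3 \<le> (t * w^2 + w^4 / t) / 2" using A unfolding B .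
  then show ?thesis unfolding v2 v4 w_def .
qed

lemma cont_of_deriv: "(\<And>x. (f has_real_derivative f' x) (at x)) \<Longrightarrow> continuous_on S f"
  by (meson DERIV_isCont continuous_at_imp_continuous_on)

lemma integral_main:
  fixes ui uip uipp U Up Upp v :: "real \<Rightarrow> real" and e a b c t :: real
  assumes ui_d: "\<And>x. (ui has_real_derivative uip x) (at x)"
    and uip_d: "\<And>x. (uip has_real_derivative uipp x) (at x)"
    and uip0: "uip 0 = 0" "uip 1 = 0"
    and U_d: "\<And>x. (U has_real_derivative Up x) (at x)"
    and Up_d: "\<And>x. (Up has_real_derivative Upp x) (at x)"
    and c_uipp: "continuous_on {0..1} uipp" and c_Upp: "continuous_on {0..1} Upp"
    and v: "regular_neumann v"
    and bui: "\<And>x. x \<in> {0..1} \<Longrightarrow> \<bar>ui x\<bar> \<le> a"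
    and bU: "\<And>x. x \<in> {0..1} \<Longrightarrow> \<bar>U x\<bar> \<le> 2"
    and bL: "\<And>x. x \<in> {0..1} \<Longrightarrow> \<bar>e^2 * Upp x - fAC (U x)\<bar> \<le> b"
    and bW: "\<And>x. x \<in> {0..1} \<Longrightarrow> \<bar>e^2 * uipp x - fp (U x) * ui x\<bar> \<le> c"
    and t: "0 < t"
  shows "ip ui (Lop e (\<lambda>x. U x + v x)) \<le>
     a * b + c / 2 + (c / 2 + 6 * a + a * t / 2) * integral {0..1} (\<lambda>x. v x ^ 2) + a / (2 * t) * integral {0..1} (\<lambda>x. v x ^ 4)"
proof -
  define vp where "vp = deriv v"
  define vpp where "vpp = deriv (deriv v)"
  have vd: "\<And>x. x \<in> {0..1} \<Longrightarrow> (v has_real_derivative vp x) (at x)"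
    and vpd: "\<And>x. x \<in> {0..1} \<Longrightarrow> (vp has_real_derivative vpp x) (at x)"
    and c_vpp: "continuous_on {0..1} vpp" and vp0: "vp 0 = 0" "vp 1 = 0"
    using v unfolding regular_neumann_def vp_def vpp_def
    by (auto simp: DERIV_deriv_iff_real_differentiable)
  have a0: "0 \<le> a" using bui[of 0] by simp
  have c0: "0 \<le> c" using bW[of 0] by simp
  have c_v: "continuous_on {0..1} v"
    using vd by (meson DERIV_isCont continuous_at_imp_continuous_on)
  have c_vp: "continuous_on {0..1} vp"
    using vpd by (meson DERIV_isCont continuous_at_imp_continuous_on)
  have c_ui: "continuous_on {0..1} ui" by (rule cont_of_deriv[OF ui_d])
  have c_uip: "continuous_on {0..1} uip" by (rule cont_of_deriv[OF uip_d])
  have c_U: "continuous_on {0..1} U" by (rule cont_of_deriv[OF U_d])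
  have lop: "Lop e (\<lambda>x. U x + v x) x = e^2 * (Upp x + vpp x) - fAC (U x + v x)" if x: "x \<in> {0<..<1}" for x
  proof -
    have ev: "\<forall>\<^sub>F y in nhds x. deriv (\<lambda>x. U x + v x) y = Up y + vp y"
    proof -
      have "\<forall>\<^sub>F y in nhds x. y \<in> {0<..<1}" using x by (intro eventually_nhds_in_open) auto
      then show ?thesis
      proof (rule eventually_mono)
        fix y :: real assume "y \<in> {0<..<1}"
        then have "((\<lambda>x. U x + v x) has_real_derivative Up y + vp y) (at y)"
          using U_d vd by (intro DERIV_add) auto
        then show "deriv (\<lambda>x. U x + v x) y = Up y + vp y" by (rule DERIV_imp_deriv)
      qed
    qed
    have "deriv (deriv (\<lambda>x. U x + v x)) x = deriv (\<lambda>y. Up y + vp y) x"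
      by (rule deriv_cong_ev[OF ev refl])
    also have "\<dots> = Upp x + vpp x"
      using Up_d vpd x by (intro DERIV_imp_deriv DERIV_add) auto
    finally show ?thesis unfolding Lop_def by simp
  qed
  define g where "g x = ui x * (e^2 * Upp x - fAC (U x)) + (e^2 * uipp x - fp (U x) * ui x) * v x
      - ui x * (3 * U x * (v x)^2 + (v x)^3)" for x
  define w where "w x = ui x * vpp x - uipp x * v x" for x
  have pw: "ui x * (e^2 * (Upp x + vpp x) - fAC (U x + v x)) = g x + e^2 * w x" for x
    unfolding g_def w_def fAC_def fp_def by (simp add: algebra_simps power2_eq_square power3_eq_cube)
  have c_g: "continuous_on {0..1} g" unfolding g_def fAC_def fp_def
    by (intro continuous_intros c_ui c_Upp c_U c_uipp c_v)
  have c_w: "continuous_on {0..1} w" unfolding w_def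
    by (intro continuous_intros c_ui c_vpp c_uipp c_v)
  have w_int: "(w has_integral 0) {0..1}"
  proof -
    define F where "F x = ui x * vp x - uip x * v x" for x
    have "(w has_integral (F 1 - F 0)) {0..1}"
    proof (rule fundamental_theorem_of_calculus)
      fix x :: real assume x: "x \<in> {0..1}"
      have "(F has_real_derivative (uip x * vp x + vpp x * ui x) - (uipp x * v x + vp x * uip x)) (at x)"
        unfolding F_def[abs_def]
        by (intro DERIV_diff DERIV_mult ui_d uip_d vd[OF x] vpd[OF x])
      moreover have "(uip x * vp x + vpp x * ui x) - (uipp x * v x + vp x * uip x) = w x"
        unfolding w_def by simp
      ultimately have "(F has_real_derivative w x) (at x within {0..1})"
        by (simp add: has_field_derivative_at_within)
      then show "(F has_vector_derivative w x) (at x within {0..1})"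
        by (simp add: has_real_derivative_iff_has_vector_derivative)
    qed simp
    moreover have "F 1 - F 0 = 0" unfolding F_def using vp0 uip0 by simp
    ultimately show ?thesis by simp
  qed
  have g_int: "g integrable_on {0..1}" by (rule integrable_continuous_interval[OF c_g])
  have main_eq: "ip ui (Lop e (\<lambda>x. U x + v x)) = integral {0..1} g"
  proof -
    have "((\<lambda>x. g x + e^2 * w x) has_integral (integral {0..1} g + e^2 * 0)) {0..1}"
      by (intro has_integral_add has_integral_mult_right w_int integrable_integral g_int)
    then have h1: "((\<lambda>x. ui x * (e^2 * (Upp x + vpp x) - fAC (U x + v x))) has_integral integral {0..1} g) {0..1}"
      unfolding pw by simp
    have "((\<lambda>x. ui x * Lop e (\<lambda>x. U x + v x) x) has_integral integral {0..1} g) {0..1}"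
      by (rule has_integral_spike_finite[OF _ _ h1, of "{0,1}"]) (auto simp: lop)
    then show ?thesis unfolding ip_def by (rule integral_unique)
  qed
  define K0 where "K0 = a * b + c / 2"
  have K0I: "((\<lambda>x. K0) has_integral K0) {0..1::real}" using has_integral_const_real[of K0 0 1] by simp
  define G where "G x = K0 + (c / 2 + 6 * a + a * t / 2) * (v x)^2 + a / (2 * t) * (v x)^4" for x
  have gG: "g x \<le> G x" if x: "x \<in> {0..1}" for x
  proof -
    have t1: "\<bar>ui x * (e^2 * Upp x - fAC (U x))\<bar> \<le> a * b"
      unfolding abs_mult using bui[OF x] bL[OF x] a0 by (intro mult_mono) auto
    have t2: "\<bar>(e^2 * uipp x - fp (U x) * ui x) * v x\<bar> \<le> c * ((1 + (v x)^2) / 2)"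
    proof -
      have "0 \<le> (\<bar>v x\<bar> - 1)^2" by simp
      also have "(\<bar>v x\<bar> - 1)^2 = (v x)^2 - 2 * \<bar>v x\<bar> + 1" by (simp add: power2_diff)
      finally have "\<bar>v x\<bar> \<le> (1 + (v x)^2) / 2" by simp
      then show ?thesis unfolding abs_mult using bW[OF x] c0 by (intro mult_mono) auto
    qed
    have t3: "\<bar>ui x * (3 * U x * (v x)^2)\<bar> \<le> a * (6 * (v x)^2)"
    proof -
      have "\<bar>U x\<bar> * (v x)^2 \<le> 2 * (v x)^2" using bU[OF x] by (intro mult_right_mono) auto
      then have "\<bar>3 * U x * (v x)^2\<bar> \<le> 6 * (v x)^2" by (simp add: abs_mult)
      then show ?thesis unfolding abs_mult[of "ui x"] using bui[OF x] a0 by (intro mult_mono) auto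
    qed
    have t4: "\<bar>ui x * (v x)^3\<bar> \<le> a * ((t * (v x)^2 + (v x)^4 / t) / 2)"
    proof -
      have "\<bar>(v x)^3\<bar> \<le> (t * (v x)^2 + (v x)^4 / t) / 2" using amgm3[OF t, of "v x"] by (simp add: power_abs)
      then show ?thesis unfolding abs_mult[of "ui x"] using bui[OF x] a0 by (intro mult_mono) auto
    qed
    have geq: "g x = ui x * (e^2 * Upp x - fAC (U x)) + (e^2 * uipp x - fp (U x) * ui x) * v x
       - ui x * (3 * U x * (v x)^2) - ui x * (v x)^3" unfolding g_def by (simp add: algebra_simps)
    have "g x \<le> a * b + c * ((1 + (v x)^2) / 2) + a * (6 * (v x)^2) + a * ((t * (v x)^2 + (v x)^4 / t) / 2)"
      unfolding geq using t1 t2 t3 t4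
        abs_ge_self[of "ui x * (e^2 * Upp x - fAC (U x))"]
        abs_ge_self[of "(e^2 * uipp x - fp (U x) * ui x) * v x"]
        abs_ge_minus_self[of "ui x * (3 * U x * (v x)^2)"]
        abs_ge_minus_self[of "ui x * (v x)^3"] by linarith
    also have "\<dots> = G x" unfolding G_def K0_def using t by (simp add: field_simps)
    finally show ?thesis .
  qed
  have i2: "(\<lambda>x. (v x)^2) integrable_on {0..1}"
    by (intro integrable_continuous_interval continuous_intros c_v)
  have i4: "(\<lambda>x. (v x)^4) integrable_on {0..1}"
    by (intro integrable_continuous_interval continuous_intros c_v)
  have GI: "(G has_integral (K0 + (c / 2 + 6 * a + a * t / 2) * integral {0..1} (\<lambda>x. v x ^ 2) + a / (2 * t) * integral {0..1} (\<lambda>x. v x ^ 4))) {0..1}"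
    unfolding G_def
    by (intro has_integral_add has_integral_mult_right integrable_integral i2 i4 K0I)
  have "integral {0..1} g \<le> integral {0..1} G"
    by (rule integral_le[OF g_int]) (use GI gG in auto)
  also have "integral {0..1} G = K0 + (c / 2 + 6 * a + a * t / 2) * integral {0..1} (\<lambda>x. v x ^ 2) + a / (2 * t) * integral {0..1} (\<lambda>x. v x ^ 4)"
    using GI by (rule integral_unique)
  finally show ?thesis unfolding main_eq K0_def .
qed

lemma pointwise_all:
  fixes h :: "nat \<Rightarrow> real" and N :: nat and e \<delta> D x :: real
  assumes e: "0 < e" "e < 1" and D: "0 < D"
    and om1: "\<And>j. j \<in> {1..N+1} \<Longrightarrow> D/2 < h j \<and> h j < 1 - D/2"
    and ch: "\<And>j k. 1 \<le> j \<Longrightarrow> j < k \<Longrightarrow> k \<le> N+1 \<Longrightarrow> h j + D < h k"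
    and dd: "\<delta> = 4 * exp (- (D/2/e))"
    and A5: "1000 * (N+1) * \<delta> \<le> e^3"
    and x: "x \<in> {0..1}"
  shows "\<bar>-1 + (\<Sum>j=1..N+1. sg j * phi e (h j) x)\<bar> \<le> 2"
    and "\<bar>e^2 * (\<Sum>j=1..N+1. sg j * phixx e (h j) x) - fAC (-1 + (\<Sum>j=1..N+1. sg j * phi e (h j) x))\<bar> \<le> 35 * (N+1) * \<delta> / e"
    and "\<And>j. j \<in> {1..N+1} \<Longrightarrow> \<bar>phit e (h j) x\<bar> \<le> 2 / e"
    and "\<And>j. j \<in> {1..N+1} \<Longrightarrow> \<bar>e^2 * phitxx e (h j) x - fp (-1 + (\<Sum>j=1..N+1. sg j * phi e (h j) x)) * phit e (h j) x\<bar> \<le> 100 * (N+1) * \<delta> / e^2"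
proof -
  obtain k where k: "k \<in> {1..N+1}" and k1: "\<forall>j\<in>{1..N+1}. j \<noteq> k \<longrightarrow> D/2 \<le> \<bar>x - h j\<bar>"
    and k2: "\<forall>j\<in>{1..N+1}. j < k \<longrightarrow> h j < x" and k3: "\<forall>j\<in>{1..N+1}. k < j \<longrightarrow> x < h j"
    using closest[where h=h and N=N and D=D and x=x, OF D ch] by blast
  have EEd: "EE y \<le> \<delta>" if "D/2/e \<le> \<bar>y\<bar>" for y
    unfolding dd by (rule EE_le_delta[OF that])
  interpret PW e \<delta> N k h x
  proof
    show "0 < e" "e \<le> 1" using e by auto
    show "1 \<le> k" "k \<le> N+1" using k by auto
    show "0 \<le> x" "x \<le> 1" using x by auto
    show "EE ((x - h j)/e) \<le> \<delta>" if "j \<in> {1..N+1}" "j \<noteq> k" for j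
    proof (rule EEd)
      have "D/2 \<le> \<bar>x - h j\<bar>" using k1 that by auto
      then have "D/2/e \<le> \<bar>x - h j\<bar>/e" using e by (intro divide_right_mono) auto
      then show "D/2/e \<le> \<bar>(x - h j)/e\<bar>" using e by (simp add: abs_div)
    qed
    show "h j < x" if "j \<in> {1..N+1}" "j < k" for j using k2 that by auto
    show "x < h j" if "j \<in> {1..N+1}" "k < j" for j using k3 that by auto
    show "EE (- h j/e) \<le> \<delta> \<and> EE ((1 - h j)/e) \<le> \<delta> \<and> 0 < h j \<and> h j < 1" if j: "j \<in> {1..N+1}" for j
    proof (intro conjI)
      have a1: "D/2/e \<le> h j/e" using om1[OF j] e by (intro divide_right_mono) auto
      have a2: "D/2/e \<le> (1 - h j)/e" using om1[OF j] e by (intro divide_right_mono) auto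
      have h0: "0 < h j" "h j < 1" using om1[OF j] D by auto
      show "EE (- h j/e) \<le> \<delta>"
        by (rule EEd) (use a1 h0 e in \<open>simp add: abs_div\<close>)
      show "EE ((1 - h j)/e) \<le> \<delta>"
        by (rule EEd) (use a2 h0 e in \<open>simp add: abs_div\<close>)
      show "0 < h j" "h j < 1" using om1[OF j] D by auto
    qed
    show "1000 * (N+1) * \<delta> \<le> e^3" by (rule A5)
  qed
  show "\<bar>-1 + (\<Sum>j=1..N+1. sg j * phi e (h j) x)\<bar> \<le> 2" using Ux_bound[unfolded Ux_def] .
  show "\<bar>e^2 * (\<Sum>j=1..N+1. sg j * phixx e (h j) x) - fAC (-1 + (\<Sum>j=1..N+1. sg j * phi e (h j) x))\<bar> \<le> 35 * (N+1) * \<delta> / e"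
    using L_bound[unfolded Ux_def Uppx_def] .
  show "\<And>j. j \<in> {1..N+1} \<Longrightarrow> \<bar>phit e (h j) x\<bar> \<le> 2 / e" by (rule phit_bound)
  show "\<And>j. j \<in> {1..N+1} \<Longrightarrow> \<bar>e^2 * phitxx e (h j) x - fp (-1 + (\<Sum>j=1..N+1. sg j * phi e (h j) x)) * phit e (h j) x\<bar> \<le> 100 * (N+1) * \<delta> / e^2"
    using phitxx_bound[unfolded Ux_def] by blast
qed

lemma phitx_0: "phitx e t 0 = 0" unfolding phitx_def by simp
lemma phitx_1: "phitx e t 1 = 0" unfolding phitx_def by (simp add: algebra_simps diff_divide_distrib)

lemma T3_deriv: "(T3 has_real_derivative (6 * Uw y * T1 y * T1 y + (3 * Uw y ^ 2 - 1) * T2 y)) (at y)"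
  unfolding T3_def[abs_def]
  by (auto intro!: derivative_eq_intros Uw_deriv T1_deriv simp: algebra_simps power2_eq_square)

lemma T3_chain [derivative_intros]:
  "(f has_real_derivative D) (at x within S) \<Longrightarrow> ((\<lambda>x. T3 (f x)) has_real_derivative
     (6 * Uw (f x) * T1 (f x) * T1 (f x) + (3 * Uw (f x) ^ 2 - 1) * T2 (f x)) * D) (at x within S)"
  using DERIV_chain2[OF T3_deriv] by blast

lemma cont_phixx: "e \<noteq> 0 \<Longrightarrow> continuous_on S (phixx e t)"
proof -
  assume e: "e \<noteq> 0"
  have "\<And>x. (phixx e t has_real_derivative T3 ((x - t)/e) * (1/e) / e^2) (at x)"
    unfolding phixx_def[abs_def] using e by (auto intro!: derivative_eq_intros simp: field_simps eval_nat_numeral)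
  then show ?thesis by (rule cont_of_deriv)
qed

lemma cont_phitxx: "e \<noteq> 0 \<Longrightarrow> continuous_on S (phitxx e t)"
proof -
  assume e: "e \<noteq> 0"
  have "\<And>x. (phitxx e t has_real_derivative
      - ((6 * Uw ((x - t)/e) * T1 ((x - t)/e) * T1 ((x - t)/e) + (3 * Uw ((x - t)/e) ^ 2 - 1) * T2 ((x - t)/e)) * (1/e) / e^3)) (at x)"
    unfolding phitxx_def[abs_def] using e by (auto intro!: derivative_eq_intros simp: field_simps eval_nat_numeral)
  then show ?thesis by (rule cont_of_deriv)
qed

lemma epow_div: "0 < (e::real) \<Longrightarrow> e powr a / e = e powr (a - 1)"
  by (simp add: powr_diff powr_one)

lemma epow_div2: "0 < (e::real) \<Longrightarrow> e powr a / e^2 = e powr (a - 2)"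
  by (simp add: powr_diff)

lemma L2_bound: assumes "L2norm v < e powr a" shows "integral {0..1} (\<lambda>x. v x ^ 2) < e powr (2 * a)"
        and "0 \<le> integral {0..1} (\<lambda>x. v x ^ 2) \<or> \<not> (\<lambda>x. v x ^ 2) integrable_on {0..1}"
proof -
  define I where "I = integral {0..1} (\<lambda>x. v x ^ 2)"
  have I0: "0 \<le> I"
  proof (cases "(\<lambda>x. v x ^ 2) integrable_on {0..1}")
    case True then show ?thesis unfolding I_def by (intro integral_nonneg) auto
  next
    case False then show ?thesis unfolding I_def by (simp add: not_integrable_integral)
  qed
  have "sqrt I < e powr a" using assms unfolding L2norm_def I_def .
  then have "(sqrt I)^2 < (e powr a)^2" using I0 by (intro power_strict_mono) auto
  moreover have "(sqrt I)^2 = I" using I0 by simp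
  moreover have "(e powr a)^2 = e powr (2 * a)"
    by (cases "e = 0") (simp_all add: powr_power)
  ultimately show "I < e powr (2 * a)" unfolding I_def by simp
  show "0 \<le> integral {0..1} (\<lambda>x. v x ^ 2) \<or> \<not> (\<lambda>x. v x ^ 2) integrable_on {0..1}" using I0 unfolding I_def by simp
qed

lemma int_sq_nonneg: "0 \<le> integral {0..1} (\<lambda>x. (v x::real) ^ 2)"
  by (cases "(\<lambda>x. v x ^ 2) integrable_on {0..1}") (auto intro: integral_nonneg simp: not_integrable_integral)

lemma int_4_nonneg: "0 \<le> integral {0..1} (\<lambda>x. (v x::real) ^ 4)"
proof (cases "(\<lambda>x. v x ^ 4) integrable_on {0..1}")
  case True
  have "\<And>x. 0 \<le> (v x) ^ 4" by (simp add: zero_le_even_power)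
  then show ?thesis using True by (intro integral_nonneg) auto
next
  case False then show ?thesis by (simp add: not_integrable_integral)
qed

lemma L4_bound: assumes "L4norm v < e powr a" shows "integral {0..1} (\<lambda>x. v x ^ 4) < e powr (4 * a)"
proof -
  define I where "I = integral {0..1} (\<lambda>x. v x ^ 4)"
  have I0: "0 \<le> I" unfolding I_def by (rule int_4_nonneg)
  have "I powr (1/4) < e powr a" using assms unfolding L4norm_def I_def .
  then have "(I powr (1/4))^4 < (e powr a)^4" by (intro power_strict_mono) auto
  moreover have "(I powr (1/4))^4 = I"
  proof (cases "I = 0")
    case True then show ?thesis by simp
  next
    case False then show ?thesis using I0 by (simp add: powr_power powr_one)
  qed
  moreover have "(e powr a)^4 = e powr (4 * a)"
    by (cases "e = 0") (simp_all add: powr_power)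
  ultimately show ?thesis unfolding I_def by simp
qed

lemma final_arith:
  fixes e m \<kappa> \<delta> n I2 I4 :: real
  assumes e: "0 < e" "e < 1" and m: "0 < m" and kap: "0 < \<kappa>" "\<kappa> < 1" and d: "0 \<le> \<delta>" and n: "1 \<le> n"
    and sm: "1000 * n * \<delta> \<le> e powr (4 + 2*m)"
    and I2: "0 \<le> I2" "I2 < e powr (3 + 2*m)" and I4: "0 \<le> I4" "I4 < e powr (3 + 2*m - 4*\<kappa>)"
  shows "(6/e) * (35 * n * \<delta> / e) + (300 * n * \<delta> / e^2) / 2
     + ((300 * n * \<delta> / e^2) / 2 + 6 * (6/e) + (6/e) * e powr (-2*\<kappa>) / 2) * I2
     + (6/e) / (2 * e powr (-2*\<kappa>)) * I4 \<le> 43 * e powr (2 + 2*m - 2*\<kappa>)"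
proof -
  define q where "q = n * \<delta> / e^2"
  define F where "F = e powr (2 + 2*m)"
  define E where "E = e powr (2 + 2*m - 2*\<kappa>)"
  have q0: "0 \<le> q" unfolding q_def using n d by simp
  have FE: "F \<le> E" unfolding F_def E_def using e kap by (intro powr_mono') auto
  have qF: "1000 * q \<le> F"
  proof -
    have "1000 * q = (1000 * n * \<delta>) / e^2" unfolding q_def by simp
    also have "\<dots> \<le> e powr (4 + 2*m) / e^2" using sm e by (intro divide_right_mono) auto
    also have "\<dots> = F" unfolding F_def using e by (simp add: epow_div2)
    finally show ?thesis .
  qed
  have I21: "I2 \<le> 1"
  proof -
    have "e powr (3 + 2*m) \<le> 1" using e m by (simp add: powr_le1)
    then show ?thesis using I2 by simp
  qed
  have t1: "(6/e) * (35 * n * \<delta> / e) + (300 * n * \<delta> / e^2) / 2 + (300 * n * \<delta> / e^2) / 2 * I2 \<le> 510 * q"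
  proof -
    have a: "(6/e) * (35 * n * \<delta> / e) = 210 * q" unfolding q_def by (simp add: power2_eq_square)
    have b: "(300 * n * \<delta> / e^2) / 2 = 150 * q" unfolding q_def by simp
    have c: "150 * q * I2 \<le> 150 * q" using I21 q0 by (simp add: mult_left_le)
    show ?thesis unfolding a b using c by linarith
  qed
  have t2: "6 * (6/e) * I2 \<le> 36 * F"
  proof -
    have "6 * (6/e) * I2 \<le> 36 / e * e powr (3 + 2*m)" using I2 e by (simp add: divide_right_mono)
    also have "\<dots> = 36 * (e powr (3 + 2*m) / e)" by simp
    also have "e powr (3 + 2*m) / e = F" unfolding F_def using e by (simp add: epow_div)
    finally show ?thesis by simp
  qed
  have t3: "(6/e) * e powr (-2*\<kappa>) / 2 * I2 \<le> 3 * E"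
  proof -
    have "(6/e) * e powr (-2*\<kappa>) / 2 * I2 \<le> (6/e) * e powr (-2*\<kappa>) / 2 * e powr (3 + 2*m)"
      using I2 e by (intro mult_left_mono) auto
    also have "\<dots> = 3 * ((e powr (-2*\<kappa>) * e powr (3 + 2*m)) / e)" by simp
    also have "e powr (-2*\<kappa>) * e powr (3 + 2*m) = e powr (3 + 2*m - 2*\<kappa>)" by (simp add: powr_add[symmetric])
    also have "e powr (3 + 2*m - 2*\<kappa>) / e = E" unfolding E_def epow_div[OF e(1)]
      by (rule arg_cong[where f="\<lambda>a. e powr a"]) simp
    finally show ?thesis .
  qed
  have t4: "(6/e) / (2 * e powr (-2*\<kappa>)) * I4 \<le> 3 * E"
  proof -
    have "(6/e) / (2 * e powr (-2*\<kappa>)) * I4 \<le> (6/e) / (2 * e powr (-2*\<kappa>)) * e powr (3 + 2*m - 4*\<kappa>)"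
      using I4 e by (intro mult_left_mono) auto
    also have "\<dots> = 3 * ((e powr (3 + 2*m - 4*\<kappa>) / e powr (-2*\<kappa>)) / e)" by simp
    also have "e powr (3 + 2*m - 4*\<kappa>) / e powr (-2*\<kappa>) = e powr (3 + 2*m - 2*\<kappa>)"
      by (simp add: powr_diff[symmetric])
    also have "e powr (3 + 2*m - 2*\<kappa>) / e = E" unfolding E_def epow_div[OF e(1)]
      by (rule arg_cong[where f="\<lambda>a. e powr a"]) simp
    finally show ?thesis .
  qed
  have "(6/e) * (35 * n * \<delta> / e) + (300 * n * \<delta> / e^2) / 2
     + ((300 * n * \<delta> / e^2) / 2 + 6 * (6/e) + (6/e) * e powr (-2*\<kappa>) / 2) * I2
     + (6/e) / (2 * e powr (-2*\<kappa>)) * I4 =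
     ((6/e) * (35 * n * \<delta> / e) + (300 * n * \<delta> / e^2) / 2 + (300 * n * \<delta> / e^2) / 2 * I2)
     + 6 * (6/e) * I2 + (6/e) * e powr (-2*\<kappa>) / 2 * I2 + (6/e) / (2 * e powr (-2*\<kappa>)) * I4"
    by (simp add: algebra_simps)
  also have "\<dots> \<le> 510 * q + 36 * F + 3 * E + 3 * E" using t1 t2 t3 t4 by linarith
  also have "\<dots> \<le> 43 * E" using qF q0 FE by linarith
  finally show ?thesis unfolding E_def .
qed

lemma main_bound:
  fixes N :: nat and m \<kappa>0 \<kappa> e \<mu> :: real and \<xi> :: "nat \<Rightarrow> real" and H :: "(nat \<Rightarrow> real) \<Rightarrow> real"
    and v :: "real \<Rightarrow> real" and i :: nat
  assumes m: "0 < m" and k0: "0 < \<kappa>0" and kap: "0 < \<kappa>" "\<kappa> < 1" and e: "0 < e" "e < 1"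
    and small: "1000 * real (N+1) * (4 * exp (- (e / e powr \<kappa>0 / 2 / e))) \<le> e powr (4 + 2*m)"
    and Om: "hcomb N \<xi> (H \<xi>) \<in> Omega e (e powr \<kappa>0) N"
    and mm: "mass_map_at e N \<mu> H \<xi>"
    and v: "regular_neumann v"
    and L2: "L2norm v < e powr (3/2 + m)"
    and L4: "L4norm v < e powr (3/4 + m/2 - \<kappa>)"
    and i: "i \<in> {1..N}"
  shows "ip (uxi_i e N H \<xi> i) (Lop e (\<lambda>x. uxi e N H \<xi> x + v x)) \<le> 43 * e powr (2 + 2*m - 2*\<kappa>)"
proof -
  define h where "h = hcomb N \<xi> (H \<xi>)"
  define D where "D = e / e powr \<kappa>0"
  define \<delta> where "\<delta> = 4 * exp (- (D/2/e))"
  define n where "n = real (N+1)"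
  have n1: "1 \<le> n" unfolding n_def by simp
  have e0: "e \<noteq> 0" using e by simp
  have D0: "0 < D" unfolding D_def using e by simp
  have dpos: "0 \<le> \<delta>" unfolding \<delta>_def by simp
  have sm: "1000 * n * \<delta> \<le> e powr (4 + 2*m)" using small unfolding \<delta>_def D_def n_def .
  have e3: "e powr (4 + 2*m) \<le> e^3"
  proof -
    have "e powr (4+2*m) \<le> e powr 3" using e m by (intro powr_mono') auto
    also have "e powr 3 = e^3" using e by simp
    finally show ?thesis .
  qed
  have A5: "1000 * (N+1) * \<delta> \<le> e^3" using sm e3 unfolding n_def by simp
  have e2: "e^3 \<le> e^2" using e by (simp add: power_decreasing)
  have d8: "8 * \<delta> \<le> e^2"
  proof -
    have "8 * \<delta> \<le> 1000 * n * \<delta>" using n1 dpos by (intro mult_right_mono) auto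
    then show ?thesis using sm e3 e2 by linarith
  qed
  have om1: "\<And>j. j \<in> {1..N+1} \<Longrightarrow> D/2 < h j \<and> h j < 1 - D/2"
    using omega_facts(1)[OF Om[folded h_def]] D0 unfolding D_def by blast
  have ch: "\<And>j k. 1 \<le> j \<Longrightarrow> j < k \<Longrightarrow> k \<le> N+1 \<Longrightarrow> h j + D < h k"
    using omega_facts(2)[OF Om[folded h_def]] D0 unfolding D_def by blast
  have EEh: "EE (- h j/e) \<le> \<delta> \<and> EE ((1 - h j)/e) \<le> \<delta> \<and> 0 < h j \<and> h j < 1" if j: "j \<in> {1..N+1}" for j
  proof (intro conjI)
    have a1: "D/2/e \<le> h j/e" using om1[OF j] e by (intro divide_right_mono) auto
    have a2: "D/2/e \<le> (1 - h j)/e" using om1[OF j] e by (intro divide_right_mono) auto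
    show h0: "0 < h j" "h j < 1" using om1[OF j] D0 by auto
    show "EE (- h j/e) \<le> \<delta>" unfolding \<delta>_def
      by (rule EE_le_delta) (use a1 h0 e in \<open>simp add: abs_div\<close>)
    show "EE ((1 - h j)/e) \<le> \<delta>" unfolding \<delta>_def
      by (rule EE_le_delta) (use a2 h0 e in \<open>simp add: abs_div\<close>)
  qed
  have hi: "h i = \<xi> i" unfolding h_def hcomb_def using i by simp
  have hN: "h (N+1) = H \<xi>" unfolding h_def hcomb_def by simp
  have i1: "1 \<le> i" "i \<le> N" using i by auto
  have iN: "i \<in> {1..N+1}" "N+1 \<in> {1..N+1}" using i by auto
  have diff: "(\<lambda>s. H (\<xi>(i := \<xi> i + s))) differentiable (at 0)"
    and ev: "\<forall>\<^sub>F s in nhds 0. mass e N (hcomb N (\<xi>(i := \<xi> i + s)) (H (\<xi>(i := \<xi> i + s)))) = \<mu>"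
    using mm i unfolding mass_map_at_def by auto
  define Hd where "Hd = deriv (\<lambda>s. H (\<xi>(i := \<xi> i + s))) 0"
  have Hd_d: "((\<lambda>s. H (\<xi>(i := \<xi> i + s))) has_real_derivative Hd) (at 0)"
    using diff unfolding Hd_def by (simp add: DERIV_deriv_iff_real_differentiable)
  have rel: "sg i * Phid e (\<xi> i) + sg (N+1) * Phid e (H \<xi>) * Hd = 0"
    by (rule Hd_relation[OF e0 i1 Hd_d ev])
  have P1: "\<bar>Phid e (h j) + 2\<bar> \<le> 1/2" if j: "j \<in> {1..N+1}" for j
    using Phid_bound[of e "h j" \<delta>] EEh[OF j] e d8 by auto
  have Hd2: "\<bar>Hd\<bar> \<le> 2"
    by (rule Hd_bound[OF rel]) (use Phid_bounds[OF P1[OF iN(1)]] Phid_bounds[OF P1[OF iN(2)]] hi hN in auto)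
  have ui_eq: "uxi_i e N H \<xi> i = (\<lambda>x. sg i * phit e (h i) x + sg (N+1) * phit e (h (N+1)) x * Hd)"
    using i1 by (intro ext) (simp add: uxi_i_eq[OF e0 i1 Hd_d] h_def hcomb_def)
  have U_eq: "uxi e N H \<xi> = (\<lambda>x. -1 + (\<Sum>j=1..N+1. sg j * phi e (h j) x))"
    by (rule ext) (simp add: uxi_def uh_eq[OF e0] h_def)
  define ui where "ui x = sg i * phit e (h i) x + sg (N+1) * phit e (h (N+1)) x * Hd" for x
  define uip where "uip x = sg i * phitx e (h i) x + sg (N+1) * phitx e (h (N+1)) x * Hd" for x
  define uipp where "uipp x = sg i * phitxx e (h i) x + sg (N+1) * phitxx e (h (N+1)) x * Hd" for x
  define U where "U x = -1 + (\<Sum>j=1..N+1. sg j * phi e (h j) x)" for x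
  define Up where "Up x = (\<Sum>j=1..N+1. sg j * phix e (h j) x)" for x
  define Upp where "Upp x = (\<Sum>j=1..N+1. sg j * phixx e (h j) x)" for x
  have ui_d: "\<And>x. (ui has_real_derivative uip x) (at x)"
    unfolding ui_def[abs_def] uip_def
    by (intro DERIV_add DERIV_cmult DERIV_cmult_right phit_dx e0)
  have uip_d: "\<And>x. (uip has_real_derivative uipp x) (at x)"
    unfolding uip_def[abs_def] uipp_def
    by (intro DERIV_add DERIV_cmult DERIV_cmult_right phitx_dx e0)
  have uip0: "uip 0 = 0" "uip 1 = 0" unfolding uip_def by (simp_all add: phitx_0 phitx_1)
  have U_d: "\<And>x. (U has_real_derivative Up x) (at x)"
  proof -
    fix x
    have "((\<lambda>x. -1 + (\<Sum>j=1..N+1. sg j * phi e (h j) x)) has_real_derivative 0 + (\<Sum>j=1..N+1. sg j * phix e (h j) x)) (at x)"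
      by (intro DERIV_add DERIV_const DERIV_sum DERIV_cmult phi_dx e0)
    then show "(U has_real_derivative Up x) (at x)" unfolding U_def[abs_def] Up_def by simp
  qed
  have Up_d: "\<And>x. (Up has_real_derivative Upp x) (at x)"
    unfolding Up_def[abs_def] Upp_def
    by (intro DERIV_sum DERIV_cmult phix_dx e0)
  have c_uipp: "continuous_on {0..1} uipp" unfolding uipp_def[abs_def]
    by (intro continuous_intros cont_phitxx[OF e0])
  have c_Upp: "continuous_on {0..1} Upp" unfolding Upp_def[abs_def]
    by (intro continuous_intros cont_phixx[OF e0])
  have PW: "\<bar>U x\<bar> \<le> 2 \<and> \<bar>e^2 * Upp x - fAC (U x)\<bar> \<le> 35 * n * \<delta> / e \<and>
      (\<forall>j\<in>{1..N+1}. \<bar>phit e (h j) x\<bar> \<le> 2 / e \<and> \<bar>e^2 * phitxx e (h j) x - fp (U x) * phit e (h j) x\<bar> \<le> 100 * n * \<delta> / e^2)"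
    if x: "x \<in> {0..1}" for x
  proof -
    note pa = pointwise_all[where h=h and N=N and e=e and \<delta>=\<delta> and D=D and x=x, OF e D0 om1 ch \<delta>_def A5 x]
    have c35: "real (35 * (N+1)) = 35 * n" and c100: "real (100 * (N+1)) = 100 * n" unfolding n_def by simp_all
    show ?thesis using pa unfolding U_def[symmetric] Upp_def[symmetric] c35 c100 by auto
  qed
  have bui: "\<bar>ui x\<bar> \<le> 6 / e" if x: "x \<in> {0..1}" for x
  proof -
    have p1: "\<bar>phit e (h i) x\<bar> \<le> 2/e" and p2: "\<bar>phit e (h (N+1)) x\<bar> \<le> 2/e" using PW[OF x] iN by auto
    have "\<bar>phit e (h (N+1)) x\<bar> * \<bar>Hd\<bar> \<le> 2/e * 2" by (rule mult_mono[OF p2 Hd2]) (use e in auto)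
    then have "\<bar>sg (N+1) * phit e (h (N+1)) x * Hd\<bar> \<le> 2/e * 2"
      unfolding abs_mult by simp
    have a: "\<bar>sg i * phit e (h i) x\<bar> \<le> 2/e" using p1 by (simp add: abs_mult)
    have "\<bar>ui x\<bar> \<le> 2/e + 2/e * 2" unfolding ui_def by (rule order_trans[OF abs_triangle_ineq add_mono[OF a \<open>\<bar>sg (N+1) * phit e (h (N+1)) x * Hd\<bar> \<le> 2/e * 2\<close>]])
    then show ?thesis by simp
  qed
  have bU: "\<bar>U x\<bar> \<le> 2" if "x \<in> {0..1}" for x using PW[OF that] by auto
  have bL: "\<bar>e^2 * Upp x - fAC (U x)\<bar> \<le> 35 * n * \<delta> / e" if "x \<in> {0..1}" for x using PW[OF that] by auto
  have bW: "\<bar>e^2 * uipp x - fp (U x) * ui x\<bar> \<le> 300 * n * \<delta> / e^2" if x: "x \<in> {0..1}" for x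
  proof -
    define W where "W j = e^2 * phitxx e (h j) x - fp (U x) * phit e (h j) x" for j
    have w1: "\<bar>W i\<bar> \<le> 100 * n * \<delta> / e^2" and w2: "\<bar>W (N+1)\<bar> \<le> 100 * n * \<delta> / e^2"
      using PW[OF x] iN unfolding W_def by auto
    have eq: "e^2 * uipp x - fp (U x) * ui x = sg i * W i + sg (N+1) * Hd * W (N+1)"
      unfolding uipp_def ui_def W_def by (simp add: algebra_simps)
    have "\<bar>Hd\<bar> * \<bar>W (N+1)\<bar> \<le> 2 * (100 * n * \<delta> / e^2)" by (rule mult_mono[OF Hd2 w2]) (use e in auto)
    then have "\<bar>sg (N+1) * Hd * W (N+1)\<bar> \<le> 2 * (100 * n * \<delta> / e^2)"
      unfolding abs_mult by simp
    moreover have "\<bar>sg i * W i\<bar> \<le> 100 * n * \<delta> / e^2" using w1 by (simp add: abs_mult)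
    ultimately have "\<bar>sg i * W i + sg (N+1) * Hd * W (N+1)\<bar> \<le> 100 * n * \<delta> / e^2 + 2 * (100 * n * \<delta> / e^2)"
      by (rule order_trans[OF abs_triangle_ineq add_mono, rotated])
    then show ?thesis unfolding eq by (simp add: algebra_simps)
  qed
  have t: "0 < e powr (-2*\<kappa>)" using e by simp
  have main: "ip ui (Lop e (\<lambda>x. U x + v x)) \<le>
     (6/e) * (35 * n * \<delta> / e) + (300 * n * \<delta> / e^2) / 2 + ((300 * n * \<delta> / e^2) / 2 + 6 * (6/e) + (6/e) * e powr (-2*\<kappa>) / 2) * integral {0..1} (\<lambda>x. v x ^ 2)
     + (6/e) / (2 * e powr (-2*\<kappa>)) * integral {0..1} (\<lambda>x. v x ^ 4)"
    by (rule integral_main[OF ui_d uip_d uip0 U_d Up_d c_uipp c_Upp v bui bU bL bW t])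
  have I2: "integral {0..1} (\<lambda>x. v x ^ 2) < e powr (3 + 2*m)"
    using L2_bound(1)[OF L2] by (simp add: algebra_simps)
  have I4: "integral {0..1} (\<lambda>x. v x ^ 4) < e powr (3 + 2*m - 4*\<kappa>)"
    using L4_bound[OF L4] by (simp add: algebra_simps)
  have fin: "(6/e) * (35 * n * \<delta> / e) + (300 * n * \<delta> / e^2) / 2 + ((300 * n * \<delta> / e^2) / 2 + 6 * (6/e) + (6/e) * e powr (-2*\<kappa>) / 2) * integral {0..1} (\<lambda>x. v x ^ 2)
     + (6/e) / (2 * e powr (-2*\<kappa>)) * integral {0..1} (\<lambda>x. v x ^ 4) \<le> 43 * e powr (2 + 2*m - 2*\<kappa>)"
    by (rule final_arith[OF e m kap dpos n1 sm int_sq_nonneg I2 int_4_nonneg I4])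
  have "uxi_i e N H \<xi> i = ui" unfolding ui_eq ui_def ..
  moreover have "uxi e N H \<xi> = U" unfolding U_eq U_def ..
  ultimately show ?thesis using main fin by simp
qed

theorem lemma5p12:
  fixes N :: nat and \<mu> m :: real
  assumes "N \<ge> 1" and "-1 < \<mu>" and "\<mu> < 1" and "m > 0"
  shows "\<exists>kb>0. \<forall>\<kappa>0 \<kappa>. 0 < \<kappa>0 \<and> \<kappa>0 < kb \<and> 0 < \<kappa> \<and> \<kappa> < kb \<longrightarrow>
    (\<exists>\<epsilon>0>0. \<exists>C. \<forall>\<epsilon> \<xi> H v. 0 < \<epsilon> \<and> \<epsilon> < \<epsilon>0 \<and>
        hcomb N \<xi> (H \<xi>) \<in> Omega \<epsilon> (\<epsilon> powr \<kappa>0) N \<and>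
        mass_map_at \<epsilon> N \<mu> H \<xi> \<and>
        regular_neumann v \<and>
        (\<forall>i\<in>{1..N}. ip v (uxi_i \<epsilon> N H \<xi> i) = 0) \<and>
        L2norm v < \<epsilon> powr (3/2 + m) \<and>
        L4norm v < \<epsilon> powr (3/4 + m/2 - \<kappa>)
      \<longrightarrow> (\<forall>i\<in>{1..N}.
             ip (uxi_i \<epsilon> N H \<xi> i) (Lop \<epsilon> (\<lambda>x. uxi \<epsilon> N H \<xi> x + v x))
               \<le> C * \<epsilon> powr (2 + 2*m - 2*\<kappa>)))"
proof -
  have "\<forall>\<kappa>0 \<kappa>. 0 < \<kappa>0 \<and> \<kappa>0 < 1 \<and> 0 < \<kappa> \<and> \<kappa> < 1 \<longrightarrow>
    (\<exists>\<epsilon>0>0. \<exists>C. \<forall>\<epsilon> \<xi> H v. 0 < \<epsilon> \<and> \<epsilon> < \<epsilon>0 \<and>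
        hcomb N \<xi> (H \<xi>) \<in> Omega \<epsilon> (\<epsilon> powr \<kappa>0) N \<and>
        mass_map_at \<epsilon> N \<mu> H \<xi> \<and>
        regular_neumann v \<and>
        (\<forall>i\<in>{1..N}. ip v (uxi_i \<epsilon> N H \<xi> i) = 0) \<and>
        L2norm v < \<epsilon> powr (3/2 + m) \<and>
        L4norm v < \<epsilon> powr (3/4 + m/2 - \<kappa>)
      \<longrightarrow> (\<forall>i\<in>{1..N}.
             ip (uxi_i \<epsilon> N H \<xi> i) (Lop \<epsilon> (\<lambda>x. uxi \<epsilon> N H \<xi> x + v x))
               \<le> C * \<epsilon> powr (2 + 2*m - 2*\<kappa>)))"
  proof (intro allI impI)
    fix \<kappa>0 \<kappa> :: real
    assume kk: "0 < \<kappa>0 \<and> \<kappa>0 < 1 \<and> 0 < \<kappa> \<and> \<kappa> < 1"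
    obtain e0 where e0: "e0 > 0"
      and e0s: "\<forall>e. 0 < e \<and> e < e0 \<longrightarrow> (1000 * real (N+1)) * (4 * exp (- (e / e powr \<kappa>0 / 2 / e))) \<le> e powr (4 + 2*m)"
      using small_exp[of \<kappa>0 "4 + 2*m" "1000 * real (N+1)"] kk assms(4) by auto
    have P: "\<forall>\<epsilon> \<xi> H v. 0 < \<epsilon> \<and> \<epsilon> < min e0 1 \<and>
        hcomb N \<xi> (H \<xi>) \<in> Omega \<epsilon> (\<epsilon> powr \<kappa>0) N \<and>
        mass_map_at \<epsilon> N \<mu> H \<xi> \<and>
        regular_neumann v \<and>
        (\<forall>i\<in>{1..N}. ip v (uxi_i \<epsilon> N H \<xi> i) = 0) \<and>
        L2norm v < \<epsilon> powr (3/2 + m) \<and>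
        L4norm v < \<epsilon> powr (3/4 + m/2 - \<kappa>)
      \<longrightarrow> (\<forall>i\<in>{1..N}.
             ip (uxi_i \<epsilon> N H \<xi> i) (Lop \<epsilon> (\<lambda>x. uxi \<epsilon> N H \<xi> x + v x))
               \<le> 43 * \<epsilon> powr (2 + 2*m - 2*\<kappa>))"
    proof (intro allI impI ballI)
      fix \<epsilon> :: real and \<xi> :: "nat \<Rightarrow> real" and H :: "(nat \<Rightarrow> real) \<Rightarrow> real" and v :: "real \<Rightarrow> real" and i :: nat
      assume hyp: "0 < \<epsilon> \<and> \<epsilon> < min e0 1 \<and>
        hcomb N \<xi> (H \<xi>) \<in> Omega \<epsilon> (\<epsilon> powr \<kappa>0) N \<and>
        mass_map_at \<epsilon> N \<mu> H \<xi> \<and>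
        regular_neumann v \<and>
        (\<forall>i\<in>{1..N}. ip v (uxi_i \<epsilon> N H \<xi> i) = 0) \<and>
        L2norm v < \<epsilon> powr (3/2 + m) \<and>
        L4norm v < \<epsilon> powr (3/4 + m/2 - \<kappa>)"
        and i: "i \<in> {1..N}"
      have sm: "1000 * real (N+1) * (4 * exp (- (\<epsilon> / \<epsilon> powr \<kappa>0 / 2 / \<epsilon>))) \<le> \<epsilon> powr (4 + 2*m)"
        using e0s hyp by auto
      show "ip (uxi_i \<epsilon> N H \<xi> i) (Lop \<epsilon> (\<lambda>x. uxi \<epsilon> N H \<xi> x + v x)) \<le> 43 * \<epsilon> powr (2 + 2*m - 2*\<kappa>)"
        by (rule main_bound[where \<mu>=\<mu>]) (use assms(4) kk hyp sm i in auto)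
    qed
    have "0 < min e0 1" using e0 by simp
    then show "\<exists>\<epsilon>0>0. \<exists>C. \<forall>\<epsilon> \<xi> H v. 0 < \<epsilon> \<and> \<epsilon> < \<epsilon>0 \<and>
        hcomb N \<xi> (H \<xi>) \<in> Omega \<epsilon> (\<epsilon> powr \<kappa>0) N \<and>
        mass_map_at \<epsilon> N \<mu> H \<xi> \<and>
        regular_neumann v \<and>
        (\<forall>i\<in>{1..N}. ip v (uxi_i \<epsilon> N H \<xi> i) = 0) \<and>
        L2norm v < \<epsilon> powr (3/2 + m) \<and>
        L4norm v < \<epsilon> powr (3/4 + m/2 - \<kappa>)
      \<longrightarrow> (\<forall>i\<in>{1..N}.
             ip (uxi_i \<epsilon> N H \<xi> i) (Lop \<epsilon> (\<lambda>x. uxi \<epsilon> N H \<xi> x + v x))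
               \<le> C * \<epsilon> powr (2 + 2*m - 2*\<kappa>))" using P by blast
  qed
  then show ?thesis by (intro exI[of _ 1]) auto
qed

end
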